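(* Let $l\ge1$ and fixed states $\sigma_1,\dots,\sigma_l\in D_k$ be given (independent of $n$). For each $n$, let $(M_i^{(n)})_{i=1}^l$ be a POVM on $\mathbb C^{N}$ ($N=N(n)$; $M_i^{(n)}\ge0$, $\sum_iM_i^{(n)}=I_N$) with $\|M_i^{(n)}\|=1$ for all $i$, and let $\Phi_n(\rho)=\sum_{i=1}^l\mathrm{Tr}[M_i^{(n)}\rho]\sigma_i$. Then the sequence of projections $P_n=V_nV_n^*$ associated to $\Phi_n$ (via Stinespring isometries $V_n$ with $\Phi_n(X)=(\mathrm{id}\otimes\mathrm{Tr})(V_nXV_n^* )$) satisfies condition $\mathcal C_m$, where $$m=\liminf_{n\to\infty}\min_{1\le i\le l}\dim_1M_i^{(n)}\ \ge 1.$$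
   Context: $\dim_1X$ denotes the dimension of the eigenspace of $X$ for the eigenvalue $1$. Condition $\mathcal C_m$: for every $A\in D_k$, the $m$ largest eigenvalues of $P_n(A\otimes I)P_n$ converge as $n\to\infty$ to a common limit $f(A)$. $D_k$ is the set of $k\times k$ density matrices. *)

theory Defs
  imports "Jordan_Normal_Form.Jordan_Normal_Form_Uniqueness"
          "Jordan_Normal_Form.Schur_Decomposition"
          "HOL-Library.Extended_Nat"
          "HOL-Library.Liminf_Limsup"
begin

definition vnorm :: "complex vec \<Rightarrow> real" where
  "vnorm v = sqrt (\<Sum>i<dim_vec v. (cmod (v $ i))\<^sup>2)"

definition op_norm :: "complex mat \<Rightarrow> real" where
  "op_norm A = Sup {vnorm (A *\<^sub>v v) | v. v \<in> carrier_vec (dim_col A) \<and> vnorm v \<le> 1}"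

definition msum :: "nat \<Rightarrow> nat \<Rightarrow> ('i \<Rightarrow> complex mat) \<Rightarrow> 'i set \<Rightarrow> complex mat" where
  "msum r c A I = mat r c (\<lambda>ij. \<Sum>i\<in>I. A i $$ ij)"

definition mtrace :: "complex mat \<Rightarrow> complex" where
  "mtrace A = (\<Sum>i<dim_row A. A $$ (i,i))"

definition psd :: "nat \<Rightarrow> complex mat \<Rightarrow> bool" where
  "psd n A \<longleftrightarrow> A \<in> carrier_mat n n \<and> mat_adjoint A = A \<and>
     (\<forall>v \<in> carrier_vec n. 0 \<le> Re (\<Sum>i<n. cnj (v $ i) * (A *\<^sub>v v) $ i))"

definition density :: "nat \<Rightarrow> complex mat set" where
  "density k = {A. psd k A \<and> mtrace A = 1}"

(* dim_1 X : dimension of the eigenspace of X for eigenvalue 1 *)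
definition dim1 :: "complex mat \<Rightarrow> nat" where
  "dim1 X = dim_gen_eigenspace X 1 1"

definition eigs_desc :: "complex mat \<Rightarrow> real list" where
  "eigs_desc A = rev (sorted_list_of_multiset (image_mset Re (proots (char_poly A))))"

definition kron :: "complex mat \<Rightarrow> complex mat \<Rightarrow> complex mat" where
  "kron A B = mat (dim_row A * dim_row B) (dim_col A * dim_col B)
     (\<lambda>(i,j). A $$ (i div dim_row B, j div dim_col B) * B $$ (i mod dim_row B, j mod dim_col B))"

(* (id \<otimes> Tr) : partial trace over the second factor C^d of C^k \<otimes> C^d *)
definition ptrace2 :: "nat \<Rightarrow> nat \<Rightarrow> complex mat \<Rightarrow> complex mat" where
  "ptrace2 k d X = mat k k (\<lambda>(i,j). \<Sum>r<d. X $$ (i * d + r, j * d + r))"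

definition cond_C :: "nat \<Rightarrow> nat \<Rightarrow> (nat \<Rightarrow> nat) \<Rightarrow> (nat \<Rightarrow> complex mat) \<Rightarrow> bool" where
  "cond_C m k d P \<longleftrightarrow> (\<forall>A \<in> density k. \<exists>f::real. \<forall>j<m.
      (\<lambda>n. eigs_desc (P n * kron A (1\<^sub>m (d n)) * P n) ! j) \<longlonglongrightarrow> f)"

end

theory Submission
  imports Defs "Jordan_Normal_Form.Jordan_Normal_Form_Existence"
begin


definition inner :: "complex vec \<Rightarrow> complex vec \<Rightarrow> complex" where
  "inner u w = (\<Sum>i<dim_vec w. cnj (u $ i) * w $ i)"

lemma adj_dims[simp]: "dim_row (mat_adjoint A) = dim_col A" "dim_col (mat_adjoint A) = dim_row A"
  unfolding mat_adjoint_def by simp_all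

lemma adj_carrier[simp]: "A \<in> carrier_mat n m \<Longrightarrow> mat_adjoint A \<in> carrier_mat m n"
  unfolding carrier_mat_def by simp

lemma adj_index[simp]: "i < dim_col A \<Longrightarrow> j < dim_row A \<Longrightarrow> mat_adjoint A $$ (i,j) = cnj (A $$ (j,i))"
  unfolding mat_adjoint_def by (simp add: mat_of_rows_index)

lemma mv_index: assumes "A \<in> carrier_mat n m" "v \<in> carrier_vec m" "i < n"
  shows "(A *\<^sub>v v) $ i = (\<Sum>j<m. A $$ (i,j) * v $ j)"
proof -
  have "(A *\<^sub>v v) $ i = row A i \<bullet> v" using assms by simp
  also have "\<dots> = (\<Sum>j\<in>{0..<m}. row A i $ j * v $ j)" using assms unfolding scalar_prod_def
    by simp
  also have "\<dots> = (\<Sum>j<m. A $$ (i,j) * v $ j)" unfolding atLeast0LessThan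
    using assms by (intro sum.cong refl) simp
  finally show ?thesis .
qed

lemma inner_adj:
  assumes A: "A \<in> carrier_mat n m" and x: "x \<in> carrier_vec n" and y: "y \<in> carrier_vec m"
  shows "inner x (A *\<^sub>v y) = inner (mat_adjoint A *\<^sub>v x) y"
proof -
  have dA: "dim_vec (A *\<^sub>v y) = n" using A by simp
  have "inner x (A *\<^sub>v y) = (\<Sum>i<n. cnj (x $ i) * (\<Sum>j<m. A $$ (i,j) * y $ j))"
    unfolding inner_def dA using mv_index[OF A y] by (intro sum.cong refl) (simp del: index_mult_mat_vec)
  also have "\<dots> = (\<Sum>i<n. \<Sum>j<m. cnj (x $ i) * A $$ (i,j) * y $ j)"
    by (simp only: sum_distrib_left mult.assoc)
  also have "\<dots> = (\<Sum>j<m. \<Sum>i<n. cnj (x $ i) * A $$ (i,j) * y $ j)"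
    by (rule sum.swap)
  also have "\<dots> = (\<Sum>j<m. (\<Sum>i<n. cnj (x $ i) * A $$ (i,j)) * y $ j)"
    by (simp only: sum_distrib_right)
  also have "\<dots> = (\<Sum>j<m. cnj (\<Sum>i<n. cnj (A $$ (i,j)) * x $ i) * y $ j)"
    by (simp only: cnj_sum complex_cnj_mult complex_cnj_cnj mult.commute)
  also have "\<dots> = (\<Sum>j<m. cnj ((mat_adjoint A *\<^sub>v x) $ j) * y $ j)"
  proof (intro sum.cong refl)
    fix j assume j: "j \<in> {..<m}"
    have "(mat_adjoint A *\<^sub>v x) $ j = (\<Sum>i<n. mat_adjoint A $$ (j,i) * x$i)"
      using A x j by (intro mv_index[of _ m n]) auto
    also have "\<dots> = (\<Sum>i<n. cnj (A$$(i,j)) * x$i)"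
      using A j by (intro sum.cong refl) auto
    finally show "cnj (\<Sum>i<n. cnj (A $$ (i,j)) * x $ i) * y $ j = cnj ((mat_adjoint A *\<^sub>v x) $ j) * y $ j" by simp
  qed
  also have "\<dots> = inner (mat_adjoint A *\<^sub>v x) y"
    unfolding inner_def using y by simp
  finally show ?thesis .
qed

lemma inner_cnj: "dim_vec u = dim_vec w \<Longrightarrow> inner u w = cnj (inner w u)"
  unfolding inner_def by (simp add: cnj_sum mult.commute)

lemma cnj_mult_self: "cnj a * a = of_real ((cmod a)\<^sup>2)"
  by (subst complex_norm_square) (simp add: mult.commute)

lemma inner_self_real: "inner u u = of_real (\<Sum>i<dim_vec u. (cmod (u$i))\<^sup>2)"
  unfolding inner_def of_real_sum by (intro sum.cong refl) (rule cnj_mult_self)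

lemma inner_self_Re: "Re (inner u u) = (vnorm u)\<^sup>2"
proof -
  have "0 \<le> (\<Sum>i<dim_vec u. (cmod (u$i))\<^sup>2)" by (intro sum_nonneg) simp
  thus ?thesis unfolding inner_self_real vnorm_def by simp
qed

lemma inner_self_Im: "Im (inner u u) = 0"
  unfolding inner_self_real by simp

lemma inner_self_ge0: "0 \<le> Re (inner u u)"
  unfolding inner_self_Re by simp

lemma inner_self_zero: assumes "u \<in> carrier_vec n" "inner u u = 0" shows "u = 0\<^sub>v n"
proof -
  have "(\<Sum>i<n. (cmod (u$i))\<^sup>2) = 0" using assms inner_self_real[of u]
    by (metis carrier_vecD of_real_eq_0_iff)
  hence "\<forall>i\<in>{..<n}. (cmod (u$i))\<^sup>2 = 0" by (subst (asm) sum_nonneg_eq_0_iff) simp_all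
  thus ?thesis using assms by (intro eq_vecI) simp_all
qed

lemma inner_add_right: "dim_vec v = dim_vec w \<Longrightarrow> inner u (v + w) = inner u v + inner u w"
  unfolding inner_def by (simp add: distrib_left sum.distrib)

lemma inner_minus_right: "dim_vec v = dim_vec w \<Longrightarrow> inner u (v - w) = inner u v - inner u w"
  unfolding inner_def by (simp add: right_diff_distrib sum_subtractf)

lemma inner_smult_right: "inner u (c \<cdot>\<^sub>v w) = c * inner u w"
  unfolding inner_def by (simp add: sum_distrib_left mult.left_commute)

lemma inner_add_left: "dim_vec u = dim_vec v \<Longrightarrow> dim_vec w = dim_vec u \<Longrightarrow> inner (u + v) w = inner u w + inner v w"
  unfolding inner_def by (simp add: distrib_right sum.distrib)

lemma inner_minus_left: "dim_vec u = dim_vec v \<Longrightarrow> dim_vec w = dim_vec u \<Longrightarrow> inner (u - v) w = inner u w - inner v w"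
  unfolding inner_def by (simp add: left_diff_distrib sum_subtractf)

lemma inner_smult_left: "dim_vec w = dim_vec u \<Longrightarrow> inner (c \<cdot>\<^sub>v u) w = cnj c * inner u w"
  unfolding inner_def by (simp add: sum_distrib_left mult.assoc)

lemma herm_form:
  assumes A: "A \<in> carrier_mat n n" and h: "mat_adjoint A = A" and x: "x \<in> carrier_vec n" and y: "y \<in> carrier_vec n"
  shows "inner x (A *\<^sub>v y) = cnj (inner y (A *\<^sub>v x))"
proof -
  have "inner x (A *\<^sub>v y) = inner (A *\<^sub>v x) y" using inner_adj[OF A x y] h by simp
  also have "\<dots> = cnj (inner y (A *\<^sub>v x))" using A x y by (intro inner_cnj) simp
  finally show ?thesis .
qed

lemma psd_form: assumes "psd n A" "v \<in> carrier_vec n" shows "0 \<le> Re (inner v (A *\<^sub>v v))"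
proof -
  have A: "A \<in> carrier_mat n n" and p: "0 \<le> Re (\<Sum>i<n. cnj (v $ i) * (A *\<^sub>v v) $ i)"
    using assms unfolding psd_def by auto
  have "dim_vec (A *\<^sub>v v) = n" using A by simp
  thus ?thesis using p unfolding inner_def by simp
qed

lemma psd_herm: "psd n A \<Longrightarrow> x \<in> carrier_vec n \<Longrightarrow> y \<in> carrier_vec n \<Longrightarrow>
   inner x (A *\<^sub>v y) = cnj (inner y (A *\<^sub>v x))"
  unfolding psd_def using herm_form by blast

lemma herm_real: "(\<And>x y. x \<in> carrier_vec n \<Longrightarrow> y \<in> carrier_vec n \<Longrightarrow>
   inner x (A *\<^sub>v y) = cnj (inner y (A *\<^sub>v x))) \<Longrightarrow> x \<in> carrier_vec n \<Longrightarrow> Im (inner x (A *\<^sub>v x)) = 0"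
proof -
  assume h: "\<And>x y. x \<in> carrier_vec n \<Longrightarrow> y \<in> carrier_vec n \<Longrightarrow>
   inner x (A *\<^sub>v y) = cnj (inner y (A *\<^sub>v x))" and x: "x \<in> carrier_vec n"
  from h[OF x x] have "Im (inner x (A *\<^sub>v x)) = - Im (inner x (A *\<^sub>v x))"
    by (metis cnj.simps(2))
  thus ?thesis by simp
qed


lemma quad_real_lemma:
  fixes a b K :: real
  assumes K: "0 \<le> K" and a: "0 \<le> a" and b: "0 \<le> b"
    and h: "\<And>t. 0 \<le> a - 2 * t * K + t\<^sup>2 * K * b"
  shows "K \<le> a * b"
proof (cases "b = 0")
  case True
  show ?thesis
  proof (rule ccontr)
    assume "\<not> K \<le> a * b"
    hence Kp: "K > 0" using True by simp
    have "0 \<le> a - 2 * ((a+1)/(2*K)) * K + ((a+1)/(2*K))\<^sup>2 * K * b" by (rule h)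
    also have "\<dots> = a - (a + 1)" using Kp True by (simp add: field_simps)
    finally show False by simp
  qed
next
  case False
  hence bp: "b > 0" using b by simp
  have "0 \<le> a - 2 * (1/b) * K + (1/b)\<^sup>2 * K * b" by (rule h)
  also have "\<dots> = a - K / b" using bp by (simp add: field_simps power2_eq_square)
  finally have "K / b \<le> a" by simp
  thus ?thesis using bp by (simp add: field_simps mult.commute)
qed

lemma cs_form:
  assumes B: "B \<in> carrier_mat n n"
    and herm: "\<And>x y. x \<in> carrier_vec n \<Longrightarrow> y \<in> carrier_vec n \<Longrightarrow> inner x (B *\<^sub>v y) = cnj (inner y (B *\<^sub>v x))"
    and pos: "\<And>x. x \<in> carrier_vec n \<Longrightarrow> 0 \<le> Re (inner x (B *\<^sub>v x))"
    and x: "x \<in> carrier_vec n" and y: "y \<in> carrier_vec n"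
  shows "(cmod (inner x (B *\<^sub>v y)))\<^sup>2 \<le> Re (inner x (B *\<^sub>v x)) * Re (inner y (B *\<^sub>v y))"
proof -
  define c where "c = inner x (B *\<^sub>v y)"
  define a where "a = inner x (B *\<^sub>v x)"
  define b where "b = inner y (B *\<^sub>v y)"
  have cy: "inner y (B *\<^sub>v x) = cnj c" unfolding c_def using herm[OF y x] by simp
  have Bx: "B *\<^sub>v x \<in> carrier_vec n" and By: "B *\<^sub>v y \<in> carrier_vec n" using B x y by auto
  have main: "0 \<le> Re a - 2 * t * (cmod c)\<^sup>2 + t\<^sup>2 * (cmod c)\<^sup>2 * Re b" for t :: real
  proof -
    define s where "s = complex_of_real t * cnj c"
    define z where "z = x - s \<cdot>\<^sub>v y"
    have z: "z \<in> carrier_vec n" unfolding z_def using x y by auto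
    have Bz: "B *\<^sub>v z = B *\<^sub>v x - s \<cdot>\<^sub>v (B *\<^sub>v y)"
      unfolding z_def using B x y by (simp add: mult_minus_distrib_mat_vec mult_mat_vec)
    have "inner z (B *\<^sub>v z) = inner x (B *\<^sub>v x - s \<cdot>\<^sub>v (B *\<^sub>v y)) - inner (s \<cdot>\<^sub>v y) (B *\<^sub>v x - s \<cdot>\<^sub>v (B *\<^sub>v y))"
      unfolding Bz unfolding z_def using x y Bx By B by (intro inner_minus_left) auto
    also have "\<dots> = (a - s * c) - cnj s * (cnj c - s * b)"
      using x y Bx By unfolding a_def b_def c_def
      using B herm[OF y x] by (simp add: inner_minus_right inner_smult_right inner_smult_left algebra_simps)
    also have "\<dots> = a - s * c - cnj s * cnj c + (cnj s * s) * b" by (simp add: algebra_simps)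
    also have "\<dots> = a - of_real (2 * t * (cmod c)\<^sup>2) + of_real (t\<^sup>2 * (cmod c)\<^sup>2) * b"
    proof -
      have cc: "c * cnj c = of_real ((cmod c)\<^sup>2)" by (rule complex_norm_square[symmetric])
      have sc: "s * c = of_real (t * (cmod c)\<^sup>2)" unfolding s_def using cc
        by (metis mult.commute mult.left_commute of_real_mult)
      have cs: "cnj s * cnj c = of_real (t * (cmod c)\<^sup>2)" unfolding s_def using cc
        by (simp add: mult.commute mult.left_commute)
      have ss: "cnj s * s = of_real (t\<^sup>2 * (cmod c)\<^sup>2)" unfolding s_def using cc
        by (simp add: power2_eq_square mult.commute mult.left_commute)
      show ?thesis unfolding sc cs ss by simp
    qed
    finally have "Re (inner z (B *\<^sub>v z)) = Re a - 2 * t * (cmod c)\<^sup>2 + t\<^sup>2 * (cmod c)\<^sup>2 * Re b"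
      by simp
    with pos[OF z] show ?thesis by simp
  qed
  have "(cmod c)\<^sup>2 \<le> Re a * Re b"
    by (rule quad_real_lemma[OF _ _ _ main]) (auto simp: a_def b_def intro: pos x y)
  thus ?thesis unfolding a_def b_def c_def .
qed

lemma form_zero:
  assumes B: "B \<in> carrier_mat n n"
    and herm: "\<And>x y. x \<in> carrier_vec n \<Longrightarrow> y \<in> carrier_vec n \<Longrightarrow> inner x (B *\<^sub>v y) = cnj (inner y (B *\<^sub>v x))"
    and pos: "\<And>x. x \<in> carrier_vec n \<Longrightarrow> 0 \<le> Re (inner x (B *\<^sub>v x))"
    and y: "y \<in> carrier_vec n" and z: "Re (inner y (B *\<^sub>v y)) = 0"
  shows "B *\<^sub>v y = 0\<^sub>v n"
proof -
  have By: "B *\<^sub>v y \<in> carrier_vec n" using B y by auto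
  from cs_form[OF B herm pos By y] z have "(cmod (inner (B *\<^sub>v y) (B *\<^sub>v y)))\<^sup>2 \<le> 0" by simp
  hence "inner (B *\<^sub>v y) (B *\<^sub>v y) = 0" by simp
  thus ?thesis by (rule inner_self_zero[OF By])
qed


lemma bound_inner_mv:
  assumes C: "C \<in> carrier_mat N N" and u: "u \<in> carrier_vec N"
  shows "cmod (inner (C *\<^sub>v u) u) \<le> (\<Sum>p<N. \<Sum>q<N. cmod (C$$(p,q))) * real N * Re (inner u u)"
proof -
  define S where "S = (\<Sum>p<N. \<Sum>q<N. cmod (C$$(p,q)))"
  define a where "a = (\<lambda>p. cmod (u $ p))"
  have a0: "0 \<le> a p" for p unfolding a_def by simp
  have S0: "0 \<le> S" unfolding S_def by (intro sum_nonneg) auto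
  have CS: "cmod (C$$(p,q)) \<le> S" if "p < N" "q < N" for p q
  proof -
    have "cmod (C$$(p,q)) \<le> (\<Sum>q<N. cmod (C$$(p,q)))"
      using that by (intro member_le_sum) auto
    also have "\<dots> \<le> S" unfolding S_def using that by (intro member_le_sum[of p]) (auto intro: sum_nonneg)
    finally show ?thesis .
  qed
  have Cu: "cmod ((C *\<^sub>v u) $ p) \<le> (\<Sum>q<N. cmod (C$$(p,q)) * a q)" if "p < N" for p
  proof -
    have "(C *\<^sub>v u) $ p = (\<Sum>q<N. C$$(p,q) * u$q)" using mv_index[OF C u that] .
    hence "cmod ((C *\<^sub>v u) $ p) \<le> (\<Sum>q<N. cmod (C$$(p,q) * u$q))" by (simp add: norm_sum)
    thus ?thesis unfolding a_def by (simp add: norm_mult)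
  qed
  have dCu: "dim_vec u = N" using u by simp
  have "cmod (inner (C *\<^sub>v u) u) \<le> (\<Sum>p<N. cmod (cnj ((C *\<^sub>v u) $ p) * u $ p))"
    unfolding inner_def dCu by (rule norm_sum)
  also have "\<dots> = (\<Sum>p<N. cmod ((C *\<^sub>v u) $ p) * a p)" unfolding a_def by (simp add: norm_mult)
  also have "\<dots> \<le> (\<Sum>p<N. (\<Sum>q<N. cmod (C$$(p,q)) * a q) * a p)"
    by (intro sum_mono mult_right_mono Cu a0) auto
  also have "\<dots> = (\<Sum>p<N. \<Sum>q<N. cmod (C$$(p,q)) * (a q * a p))"
    by (simp add: sum_distrib_right mult.assoc)
  also have "\<dots> \<le> (\<Sum>p<N. \<Sum>q<N. S * (((a q)\<^sup>2 + (a p)\<^sup>2) / 2))"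
  proof (intro sum_mono)
    fix p q assume pq: "p \<in> {..<N}" "q \<in> {..<N}"
    have "a q * a p \<le> ((a q)\<^sup>2 + (a p)\<^sup>2) / 2"
      using sum_squares_bound[of "a q" "a p"] by (simp add: field_simps)
    moreover have "0 \<le> a q * a p" using a0 by simp
    ultimately show "cmod (C$$(p,q)) * (a q * a p) \<le> S * (((a q)\<^sup>2 + (a p)\<^sup>2) / 2)"
      using CS[of p q] pq S0 by (intro mult_mono) auto
  qed
  also have "\<dots> = S * real N * (\<Sum>p<N. (a p)\<^sup>2)"
  proof -
    define T where "T = (\<Sum>p<N. (a p)\<^sup>2)"
    have pt: "S * (((a q)\<^sup>2 + (a p)\<^sup>2)/2) = (S/2)*(a q)\<^sup>2 + (S/2)*(a p)\<^sup>2" for p q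
      by (simp add: field_simps)
    have "(\<Sum>p<N. \<Sum>q<N. S * (((a q)\<^sup>2 + (a p)\<^sup>2) / 2))
        = (\<Sum>p<N. (\<Sum>q<N. (S/2)*(a q)\<^sup>2) + (\<Sum>q<N. (S/2)*(a p)\<^sup>2))"
      by (simp only: pt sum.distrib)
    also have "\<dots> = (\<Sum>p<N. (S/2)*T + real N*((S/2)*(a p)\<^sup>2))"
      by (simp add: sum_distrib_left T_def)
    also have "\<dots> = real N * ((S/2)*T) + real N * ((S/2) * T)"
      by (simp add: sum.distrib sum_distrib_left T_def)
    also have "\<dots> = S * real N * T" by (simp add: field_simps)
    finally show ?thesis unfolding T_def .
  qed
  also have "(\<Sum>p<N. (a p)\<^sup>2) = Re (inner u u)" unfolding inner_self_real a_def dCu by simp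
  finally show ?thesis unfolding S_def .
qed

lemma eigen_one:
  assumes M: "M \<in> carrier_mat N N" and psdM: "psd N M"
    and le1: "\<And>x. x \<in> carrier_vec N \<Longrightarrow> Re (inner x (M *\<^sub>v x)) \<le> Re (inner x x)"
    and norm1: "op_norm M = 1"
  shows "\<exists>u \<in> carrier_vec N. u \<noteq> 0\<^sub>v N \<and> M *\<^sub>v u = u"
proof (rule ccontr)
  assume neg: "\<not> ?thesis"
  define B where "B = 1\<^sub>m N - M"
  have B: "B \<in> carrier_mat N N" unfolding B_def using M by (intro minus_carrier_mat) auto
  have Bv: "B *\<^sub>v v = v - M *\<^sub>v v" if "v \<in> carrier_vec N" for v
    unfolding B_def using M that by (simp add: minus_mult_distrib_mat_vec[OF one_carrier_mat M that])
  have "det B \<noteq> 0"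
  proof
    assume "det B = 0"
    then obtain v where v: "v \<in> carrier_vec N" "v \<noteq> 0\<^sub>v N" "B *\<^sub>v v = 0\<^sub>v N"
      using det_0_iff_vec_prod_zero[OF B] by auto
    have "M *\<^sub>v v = v"
    proof (rule eq_vecI)
      fix i assume i: "i < dim_vec v"
      have "(B *\<^sub>v v) $ i = 0" using v i by simp
      hence "v $ i - (M *\<^sub>v v) $ i = 0" using Bv[OF v(1)] v i M by simp
      thus "(M *\<^sub>v v) $ i = v $ i" by simp
    qed (use M v in simp)
    with neg v show False by auto
  qed
  from det_non_zero_imp_unit[OF B this, unfolded Units_def ring_mat_def]
  obtain C where C: "C \<in> carrier_mat N N" and BC: "B * C = 1\<^sub>m N" by auto
  define K where "K = (\<Sum>p<N. \<Sum>q<N. cmod (C$$(p,q))) * real N + 1"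
  have K1: "1 \<le> K" unfolding K_def by (simp add: sum_nonneg)
  hence K0: "0 < K" by simp
  have hermM: "\<And>x y. x \<in> carrier_vec N \<Longrightarrow> y \<in> carrier_vec N \<Longrightarrow> inner x (M *\<^sub>v y) = cnj (inner y (M *\<^sub>v x))"
    using psd_herm[OF psdM] by blast
  have posM: "\<And>x. x \<in> carrier_vec N \<Longrightarrow> 0 \<le> Re (inner x (M *\<^sub>v x))" using psd_form[OF psdM] by blast
  have innerB: "inner x (B *\<^sub>v y) = inner x y - inner x (M *\<^sub>v y)" if "x \<in> carrier_vec N" "y \<in> carrier_vec N" for x y
    unfolding Bv[OF that(2)] using that M by (intro inner_minus_right) simp
  have hermB: "\<And>x y. x \<in> carrier_vec N \<Longrightarrow> y \<in> carrier_vec N \<Longrightarrow> inner x (B *\<^sub>v y) = cnj (inner y (B *\<^sub>v x))"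
  proof -
    fix x y :: "complex vec" assume x: "x \<in> carrier_vec N" and y: "y \<in> carrier_vec N"
    have "inner x (B *\<^sub>v y) = inner x y - inner x (M *\<^sub>v y)" by (rule innerB[OF x y])
    also have "\<dots> = cnj (inner y x) - cnj (inner y (M *\<^sub>v x))"
      using inner_cnj[of x y] hermM[OF x y] x y by simp
    also have "\<dots> = cnj (inner y (B *\<^sub>v x))" using innerB[OF y x] by simp
    finally show "inner x (B *\<^sub>v y) = cnj (inner y (B *\<^sub>v x))" .
  qed
  have posB: "\<And>x. x \<in> carrier_vec N \<Longrightarrow> 0 \<le> Re (inner x (B *\<^sub>v x))"
    using innerB le1 by simp
  have keyM: "Re (inner u (M *\<^sub>v u)) \<le> (1 - 1/K) * Re (inner u u)" if u: "u \<in> carrier_vec N" for u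
  proof -
    define y where "y = C *\<^sub>v u"
    have y: "y \<in> carrier_vec N" unfolding y_def using C u by simp
    have By: "B *\<^sub>v y = u" unfolding y_def using B C u BC
      by (metis assoc_mult_mat_vec one_mult_mat_vec)
    have cs: "(cmod (inner u (B *\<^sub>v y)))\<^sup>2 \<le> Re (inner u (B *\<^sub>v u)) * Re (inner y (B *\<^sub>v y))"
      by (rule cs_form[OF B hermB posB u y])
    define T where "T = Re (inner u u)"
    have T0: "0 \<le> T" unfolding T_def by (rule inner_self_ge0)
    have iuu: "inner u u = of_real T" unfolding T_def using inner_self_Im[of u] by (simp add: complex_eq_iff)
    have "Re (inner y (B *\<^sub>v y)) \<le> cmod (inner y u)" unfolding By by (rule complex_Re_le_cmod)
    also have "\<dots> \<le> (K - 1) * T" unfolding y_def K_def T_def using bound_inner_mv[OF C u] by simp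
    finally have yB: "Re (inner y (B *\<^sub>v y)) \<le> (K - 1) * T" .
    have "T\<^sup>2 \<le> Re (inner u (B *\<^sub>v u)) * ((K - 1) * T)"
    proof -
      have "T\<^sup>2 = (cmod (inner u (B *\<^sub>v y)))\<^sup>2" unfolding By iuu using T0 by simp
      also have "\<dots> \<le> Re (inner u (B *\<^sub>v u)) * Re (inner y (B *\<^sub>v y))" by (rule cs)
      also have "\<dots> \<le> Re (inner u (B *\<^sub>v u)) * ((K - 1) * T)" by (intro mult_left_mono yB posB u)
      finally show ?thesis .
    qed
    hence TB: "T \<le> K * Re (inner u (B *\<^sub>v u))"
    proof (cases "T = 0")
      case True thus ?thesis using posB[OF u] K0 by simp
    next
      case False
      hence "T > 0" using T0 by simp
      with \<open>T\<^sup>2 \<le> _\<close> have "T \<le> Re (inner u (B *\<^sub>v u)) * (K - 1)"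
        by (simp add: power2_eq_square mult.commute mult.left_commute)
      also have "\<dots> \<le> K * Re (inner u (B *\<^sub>v u))" using posB[OF u] by (simp add: algebra_simps)
      finally show ?thesis .
    qed
    have "Re (inner u (B *\<^sub>v u)) = T - Re (inner u (M *\<^sub>v u))" unfolding innerB[OF u u] T_def by simp
    with TB K0 show ?thesis unfolding T_def[symmetric] by (simp add: field_simps)
  qed
  have keyN: "(vnorm (M *\<^sub>v u))\<^sup>2 \<le> (1 - 1/K) * (vnorm u)\<^sup>2" if u: "u \<in> carrier_vec N" for u
  proof -
    have Mu: "M *\<^sub>v u \<in> carrier_vec N" using M u by simp
    define R where "R = Re (inner (M *\<^sub>v u) (M *\<^sub>v u))"
    have R0: "0 \<le> R" unfolding R_def by (rule inner_self_ge0)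
    have iMM: "inner (M *\<^sub>v u) (M *\<^sub>v u) = of_real R" unfolding R_def
      using inner_self_Im[of "M *\<^sub>v u"] by (simp add: complex_eq_iff)
    have "R\<^sup>2 = (cmod (inner (M *\<^sub>v u) (M *\<^sub>v u)))\<^sup>2" unfolding iMM using R0 by simp
    also have "\<dots> \<le> Re (inner (M *\<^sub>v u) (M *\<^sub>v (M *\<^sub>v u))) * Re (inner u (M *\<^sub>v u))"
      by (rule cs_form[OF M hermM posM Mu u])
    also have "\<dots> \<le> R * Re (inner u (M *\<^sub>v u))"
      unfolding R_def by (intro mult_right_mono le1 Mu posM u)
    finally have "R\<^sup>2 \<le> R * Re (inner u (M *\<^sub>v u))" .
    hence "R \<le> Re (inner u (M *\<^sub>v u))"
      using R0 posM[OF u] by (cases "R = 0") (auto simp: power2_eq_square)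
    also have "\<dots> \<le> (1 - 1/K) * Re (inner u u)" by (rule keyM[OF u])
    finally show ?thesis unfolding R_def inner_self_Re .
  qed
  define r where "r = sqrt (1 - 1/K)"
  have r1: "r < 1" unfolding r_def using K0 by simp
  have bound: "vnorm (M *\<^sub>v v) \<le> r" if v: "v \<in> carrier_vec N" "vnorm v \<le> 1" for v
  proof -
    have vn0: "0 \<le> vnorm v" unfolding vnorm_def by (simp add: sum_nonneg)
    have "(vnorm (M *\<^sub>v v))\<^sup>2 \<le> (1 - 1/K) * (vnorm v)\<^sup>2" by (rule keyN[OF v(1)])
    also have "\<dots> \<le> (1 - 1/K) * 1"
      using K0 K1 v(2) vn0 by (intro mult_left_mono) (auto simp: power_le_one field_simps)
    finally have "(vnorm (M *\<^sub>v v))\<^sup>2 \<le> 1 - 1/K" by simp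
    hence "sqrt ((vnorm (M *\<^sub>v v))\<^sup>2) \<le> r" unfolding r_def by (rule real_sqrt_le_mono)
    thus ?thesis unfolding vnorm_def by simp
  qed
  have "op_norm M \<le> r" unfolding op_norm_def
  proof (rule cSup_least)
    show "{vnorm (M *\<^sub>v v) |v. v \<in> carrier_vec (dim_col M) \<and> vnorm v \<le> 1} \<noteq> {}"
      using M by (auto intro!: exI[of _ "0\<^sub>v N"] simp: vnorm_def)
    fix x assume "x \<in> {vnorm (M *\<^sub>v v) |v. v \<in> carrier_vec (dim_col M) \<and> vnorm v \<le> 1}"
    then obtain v where "x = vnorm (M *\<^sub>v v)" "v \<in> carrier_vec N" "vnorm v \<le> 1" using M by auto
    thus "x \<le> r" using bound by simp
  qed
  with r1 norm1 show False by simp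
qed


lemma msum_index: "p < r \<Longrightarrow> q < c \<Longrightarrow> msum r c A I $$ (p,q) = (\<Sum>i\<in>I. A i $$ (p,q))"
  unfolding msum_def by simp

lemma msum_carrier[simp]: "msum r c A I \<in> carrier_mat r c"
  unfolding msum_def by simp

lemma msum_dims[simp]: "dim_row (msum r c A I) = r" "dim_col (msum r c A I) = c"
  unfolding msum_def by simp_all

lemma povm_inner:
  assumes MC: "\<And>i. i < l \<Longrightarrow> M i \<in> carrier_mat N N"
    and S: "msum N N M {..<l} = 1\<^sub>m N" and u: "u \<in> carrier_vec N"
  shows "(\<Sum>i<l. inner u (M i *\<^sub>v u)) = inner u u"
proof -
  have du: "dim_vec u = N" using u by simp
  have "inner u u = inner u (msum N N M {..<l} *\<^sub>v u)" unfolding S using u by simp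
  also have "\<dots> = (\<Sum>p<N. cnj (u $ p) * (\<Sum>i<l. (M i *\<^sub>v u) $ p))"
    unfolding inner_def
  proof (intro sum.cong)
    show "{..<dim_vec (msum N N M {..<l} *\<^sub>v u)} = {..<N}" by simp
    fix p assume "p \<in> {..<N}"
    hence p: "p < N" by simp
    have "(msum N N M {..<l} *\<^sub>v u) $ p = (\<Sum>q<N. msum N N M {..<l} $$ (p,q) * u $ q)"
      by (rule mv_index[OF msum_carrier u p])
    also have "\<dots> = (\<Sum>q<N. \<Sum>i<l. M i $$ (p,q) * u $ q)"
    proof (intro sum.cong refl)
      fix q assume "q \<in> {..<N}"
      hence "msum N N M {..<l} $$ (p,q) = (\<Sum>i<l. M i $$ (p,q))" using p by (intro msum_index) auto
      thus "msum N N M {..<l} $$ (p,q) * u $ q = (\<Sum>i<l. M i $$ (p,q) * u $ q)"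
        by (simp only: sum_distrib_right)
    qed
    also have "\<dots> = (\<Sum>i<l. \<Sum>q<N. M i $$ (p,q) * u $ q)" by (rule sum.swap)
    also have "\<dots> = (\<Sum>i<l. (M i *\<^sub>v u) $ p)"
    proof (intro sum.cong refl)
      fix i assume "i \<in> {..<l}"
      hence "M i \<in> carrier_mat N N" using MC by simp
      thus "(\<Sum>q<N. M i $$ (p,q) * u $ q) = (M i *\<^sub>v u) $ p" by (rule mv_index[OF _ u p, symmetric])
    qed
    finally show "cnj (u $ p) * (msum N N M {..<l} *\<^sub>v u) $ p = cnj (u $ p) * (\<Sum>i<l. (M i *\<^sub>v u) $ p)"
      by simp
  qed
  also have "\<dots> = (\<Sum>p<N. \<Sum>i<l. cnj (u $ p) * (M i *\<^sub>v u) $ p)"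
    by (simp only: sum_distrib_left)
  also have "\<dots> = (\<Sum>i<l. \<Sum>p<N. cnj (u $ p) * (M i *\<^sub>v u) $ p)"
    by (rule sum.swap)
  also have "\<dots> = (\<Sum>i<l. inner u (M i *\<^sub>v u))"
  proof (intro sum.cong refl)
    fix i assume "i \<in> {..<l}"
    hence "M i \<in> carrier_mat N N" using MC by simp
    hence "dim_vec (M i *\<^sub>v u) = N" by simp
    thus "(\<Sum>p<N. cnj (u $ p) * (M i *\<^sub>v u) $ p) = inner u (M i *\<^sub>v u)" unfolding inner_def by simp
  qed
  finally show ?thesis by (rule sym)
qed


lemma jnf_obtain:
  assumes A: "(A :: complex mat) \<in> carrier_mat n n"
  obtains n_as where "jordan_nf A n_as"
  using jordan_nf_exists[OF A] char_poly_factorized[OF A] by blast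

lemma sum_min1_le: "(\<Sum>n \<leftarrow> map fst xs. min 1 n) \<le> sum_list (map fst (xs :: (nat \<times> 'a) list))"
  by (induct xs) auto

lemma geo_le_alg:
  assumes A: "(A :: complex mat) \<in> carrier_mat n n"
  shows "dim_gen_eigenspace A ev 1 \<le> Polynomial.order ev (char_poly A)"
proof -
  obtain n_as where j: "jordan_nf A n_as" using jnf_obtain[OF A] .
  have eq: "[(n, e)\<leftarrow>n_as . e = ev] = filter (\<lambda>na. snd na = ev) n_as"
    by (intro filter_cong) auto
  show ?thesis unfolding dim_gen_eigenspace[OF j] jordan_nf_order[OF j] eq
    by (rule sum_min1_le)
qed

lemma sum_min1_pos: "0 \<notin> fst ` set xs \<Longrightarrow> xs \<noteq> [] \<Longrightarrow> 1 \<le> (\<Sum>n \<leftarrow> map fst (xs :: (nat \<times> 'a) list). min 1 n)"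
  by (induct xs) auto

lemma eig_dim_pos:
  assumes A: "(A :: complex mat) \<in> carrier_mat n n" and v: "v \<in> carrier_vec n" "v \<noteq> 0\<^sub>v n" "A *\<^sub>v v = ev \<cdot>\<^sub>v v"
  shows "1 \<le> dim_gen_eigenspace A ev 1"
proof -
  obtain n_as where j: "jordan_nf A n_as" using jnf_obtain[OF A] .
  have "eigenvalue A ev" unfolding eigenvalue_def eigenvector_def using A v by (intro exI[of _ v]) auto
  hence "poly (char_poly A) ev = 0" using eigenvalue_root_char_poly[OF A] by simp
  moreover have "char_poly A \<noteq> 0" using degree_monic_char_poly[OF A] by auto
  ultimately have "Polynomial.order ev (char_poly A) \<noteq> 0" using order_root by blast
  hence "sum_list (map fst (filter (\<lambda>na. snd na = ev) n_as)) \<noteq> 0" unfolding jordan_nf_order[OF j] .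
  hence ne: "filter (\<lambda>na. snd na = ev) n_as \<noteq> []" by (intro notI) simp
  have eq: "[(n, e)\<leftarrow>n_as . e = ev] = filter (\<lambda>na. snd na = ev) n_as"
    by (intro filter_cong) auto
  have z: "0 \<notin> fst ` set (filter (\<lambda>na. snd na = ev) n_as)" using j unfolding jordan_nf_def by auto
  show ?thesis unfolding dim_gen_eigenspace[OF j] eq by (rule sum_min1_pos[OF z ne])
qed


lemma kdim_mono:
  fixes A B T S :: "'a :: field mat"
  assumes A: "A \<in> carrier_mat n n" and B: "B \<in> carrier_mat n' n'"
    and T: "T \<in> carrier_mat n' n" and S: "S \<in> carrier_mat n n'" and ST: "S * T = 1\<^sub>m n"
    and maps: "\<And>v. v \<in> mat_kernel A \<Longrightarrow> T *\<^sub>v v \<in> mat_kernel B"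
  shows "kernel.dim n A \<le> kernel.dim n' B"
proof -
  interpret KA: kernel n n A by (unfold_locales, rule A)
  interpret KB: kernel n' n' B by (unfold_locales, rule B)
  obtain bas where finb: "finite bas" and bas: "KA.basis bas" using kernel_basis_exists[OF A] by auto
  have dimA: "KA.dim = card bas" by (rule KA.Ker.dim_basis[OF finb bas])
  have basK: "bas \<subseteq> mat_kernel A" and basli: "\<not> KA.lin_dep bas"
    using bas unfolding KA.Ker.basis_def by auto
  have basC: "bas \<subseteq> carrier_vec n" using basK mat_kernel_carrier[OF A] by auto
  have STv: "S *\<^sub>v (T *\<^sub>v v) = v" if "v \<in> carrier_vec n" for v
    using that S T ST by (metis assoc_mult_mat_vec one_mult_mat_vec)
  have inj: "inj_on ((*\<^sub>v) T) bas"
  proof (rule inj_onI)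
    fix v w assume "v \<in> bas" "w \<in> bas" "T *\<^sub>v v = T *\<^sub>v w"
    thus "v = w" using STv basC by (metis subsetD)
  qed
  let ?bas = "(*\<^sub>v) T ` bas"
  have basK': "?bas \<subseteq> mat_kernel B" using basK maps by auto
  have card: "card ?bas = card bas" by (rule card_image[OF inj])
  have li: "\<not> KB.lin_dep ?bas"
  proof
    assume "KB.lin_dep ?bas"
    then obtain X a v where X: "finite X" "X \<subseteq> ?bas" and lc: "KB.lincomb a X = 0\<^sub>v n'"
      and v: "v \<in> X" and av: "a v \<noteq> 0"
      unfolding KB.Ker.lin_dep_def by auto
    define Y where "Y = {b \<in> bas. T *\<^sub>v b \<in> X}"
    define a' where "a' = (\<lambda>b. a (T *\<^sub>v b))"
    have YX: "(*\<^sub>v) T ` Y = X" unfolding Y_def using X by auto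
    have injY: "inj_on ((*\<^sub>v) T) Y" using inj unfolding Y_def by (rule inj_on_subset) auto
    have finY: "finite Y" using X(1) YX injY finite_imageD by blast
    have YK: "Y \<subseteq> mat_kernel A" unfolding Y_def using basK by auto
    have XK: "X \<subseteq> mat_kernel B" using X basK' by auto
    have XC: "X \<subseteq> carrier_vec n'" using XK mat_kernel_carrier[OF B] by auto
    have YC: "Y \<subseteq> carrier_vec n" using YK mat_kernel_carrier[OF A] by auto
    have lcA: "KA.lincomb a' Y = 0\<^sub>v n"
    proof -
      have cl: "KA.lincomb a' Y \<in> carrier_vec n"
        using KA.Ker.lincomb_closed[OF YK, of a'] mat_kernel_carrier[OF A] by auto
      show ?thesis
      proof (rule eq_vecI)
        show "dim_vec (KA.lincomb a' Y) = dim_vec (0\<^sub>v n)" using cl by simp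
        fix i assume "i < dim_vec (0\<^sub>v n)"
        hence i: "i < n" by simp
        have "KA.lincomb a' Y $ i = (\<Sum>y\<in>Y. a' y * y $ i)" by (rule KA.lincomb_index[OF i YK])
        also have "\<dots> = (\<Sum>y\<in>Y. a' y * (S *\<^sub>v (T *\<^sub>v y)) $ i)"
          using YC STv by (intro sum.cong refl) (simp add: subset_iff)
        also have "\<dots> = (\<Sum>x\<in>X. a x * (S *\<^sub>v x) $ i)"
          unfolding YX[symmetric] a'_def by (subst sum.reindex[OF injY]) (simp add: comp_def)
        also have "\<dots> = (\<Sum>x\<in>X. a x * (\<Sum>j<n'. S $$ (i,j) * x $ j))"
          using XC S i by (intro sum.cong refl) (simp del: index_mult_mat_vec add: mv_index subset_iff)
        also have "\<dots> = (\<Sum>j<n'. S $$ (i,j) * (\<Sum>x\<in>X. a x * x $ j))"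
        proof -
          have "(\<Sum>x\<in>X. a x * (\<Sum>j<n'. S $$ (i,j) * x $ j)) = (\<Sum>x\<in>X. \<Sum>j<n'. a x * (S $$ (i,j) * x $ j))"
            by (simp only: sum_distrib_left)
          also have "\<dots> = (\<Sum>j<n'. \<Sum>x\<in>X. a x * (S $$ (i,j) * x $ j))" by (rule sum.swap)
          also have "\<dots> = (\<Sum>j<n'. \<Sum>x\<in>X. S $$ (i,j) * (a x * x $ j))"
            by (simp only: mult.left_commute)
          also have "\<dots> = (\<Sum>j<n'. S $$ (i,j) * (\<Sum>x\<in>X. a x * x $ j))"
            by (simp only: sum_distrib_left)
          finally show ?thesis .
        qed
        also have "\<dots> = (\<Sum>j<n'. S $$ (i,j) * (KB.lincomb a X $ j))"
          by (intro sum.cong refl) (simp add: KB.lincomb_index[OF _ XK])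
        also have "\<dots> = 0" unfolding lc by simp
        finally show "KA.lincomb a' Y $ i = 0\<^sub>v n $ i" using i by simp
      qed
    qed
    obtain y where y: "y \<in> Y" "T *\<^sub>v y = v" using v YX by auto
    have "KA.lin_dep bas"
      unfolding KA.Ker.lin_dep_def
      by (intro exI[of _ Y] exI[of _ a'] exI[of _ y]) (use finY Y_def lcA y av a'_def in auto)
    with basli show False by simp
  qed
  have fd: "KB.Ker.fin_dim"
  proof -
    obtain basB where "finite basB" "KB.basis basB" using kernel_basis_exists[OF B] by auto
    thus ?thesis unfolding KB.Ker.fin_dim_def KB.Ker.basis_def by auto
  qed
  have "card ?bas \<le> KB.dim" by (rule KB.Ker.li_le_dim(2)[OF fd basK' li])
  thus ?thesis using dimA card by simp
qed


lemma sum_block: "sum f {(i::nat)*d..<i*d+d} = (\<Sum>r<d. f (i*d+r))"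
  by (rule sum.reindex_bij_witness[of _ "\<lambda>r. i*d + r" "\<lambda>a. a - i*d"]) auto

lemma sum_split: "(\<Sum>a<(k::nat)*d. f a) = (\<Sum>i<k. \<Sum>r<d. f (i*d+r) :: 'b :: comm_monoid_add)"
proof -
  have "(\<Sum>a<k*d. f a) = (\<Sum>i<k. sum f {i*d..<i*d+d})" by (rule sum.nat_group[symmetric])
  also have "\<dots> = (\<Sum>i<k. \<Sum>r<d. f (i*d+r))" by (simp only: sum_block)
  finally show ?thesis .
qed

lemma divmod_aux: assumes "(r::nat) < d" shows "(i*d+r) div d = i" "(i*d+r) mod d = r"
  using assms by auto

lemma lt_aux: assumes "(i::nat) < k" "r < d" shows "i*d+r < k*d"
proof -
  have "i*d + r < i*d + d" using assms by simp
  also have "\<dots> = (i+1)*d" by simp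
  also have "\<dots> \<le> k*d" using assms by (intro mult_right_mono) auto
  finally show ?thesis .
qed

lemma kron_dims[simp]: "dim_row (kron A B) = dim_row A * dim_row B" "dim_col (kron A B) = dim_col A * dim_col B"
  unfolding kron_def by simp_all

lemma kron_entry:
  assumes A: "A \<in> carrier_mat k k" and i: "i < k" and j: "j < k" and r: "r < d" and s: "s < d"
  shows "kron A (1\<^sub>m d) $$ (i*d+r, j*d+s) = (if r = s then A $$ (i,j) else 0)"
proof -
  have "kron A (1\<^sub>m d) $$ (i*d+r, j*d+s) = A $$ ((i*d+r) div d, (j*d+s) div d) * 1\<^sub>m d $$ ((i*d+r) mod d, (j*d+s) mod d)"
    unfolding kron_def using A lt_aux[OF i r] lt_aux[OF j s] by simp
  also have "\<dots> = A $$ (i,j) * 1\<^sub>m d $$ (r, s)" using r s by (simp only: divmod_aux)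
  also have "\<dots> = (if r = s then A $$ (i,j) else 0)" using r s by simp
  finally show ?thesis .
qed

lemma kron_carrier: "A \<in> carrier_mat k k \<Longrightarrow> kron A (1\<^sub>m d) \<in> carrier_mat (k*d) (k*d)"
  unfolding carrier_mat_def by simp

lemma kron_mv:
  assumes A: "A \<in> carrier_mat k k" and q: "q \<in> carrier_vec (k*d)" and i: "i < k" and r: "r < d"
  shows "(kron A (1\<^sub>m d) *\<^sub>v q) $ (i*d+r) = (\<Sum>j<k. A $$ (i,j) * q $ (j*d+r))"
proof -
  have "(kron A (1\<^sub>m d) *\<^sub>v q) $ (i*d+r) = (\<Sum>b<k*d. kron A (1\<^sub>m d) $$ (i*d+r, b) * q $ b)"
    by (rule mv_index[OF kron_carrier[OF A] q lt_aux[OF i r]])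
  also have "\<dots> = (\<Sum>j<k. \<Sum>s<d. kron A (1\<^sub>m d) $$ (i*d+r, j*d+s) * q $ (j*d+s))"
    by (rule sum_split)
  also have "\<dots> = (\<Sum>j<k. \<Sum>s<d. (if r = s then A $$ (i,j) * q $ (j*d+s) else 0))"
    using A i r by (intro sum.cong refl) (simp add: kron_entry)
  also have "\<dots> = (\<Sum>j<k. A $$ (i,j) * q $ (j*d+r))"
    using r by (intro sum.cong refl) (simp add: sum.delta)
  finally show ?thesis .
qed

lemma kron_form:
  assumes A: "A \<in> carrier_mat k k" and p: "p \<in> carrier_vec (k*d)" and q: "q \<in> carrier_vec (k*d)"
  shows "inner p (kron A (1\<^sub>m d) *\<^sub>v q) = (\<Sum>r<d. \<Sum>i<k. \<Sum>j<k. cnj (p $ (i*d+r)) * A $$ (i,j) * q $ (j*d+r))"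
proof -
  have dK: "dim_vec (kron A (1\<^sub>m d) *\<^sub>v q) = k*d" using A by simp
  have "inner p (kron A (1\<^sub>m d) *\<^sub>v q) = (\<Sum>a<k*d. cnj (p $ a) * (kron A (1\<^sub>m d) *\<^sub>v q) $ a)"
    unfolding inner_def dK ..
  also have "\<dots> = (\<Sum>i<k. \<Sum>r<d. cnj (p $ (i*d+r)) * (kron A (1\<^sub>m d) *\<^sub>v q) $ (i*d+r))"
    by (rule sum_split)
  also have "\<dots> = (\<Sum>i<k. \<Sum>r<d. \<Sum>j<k. cnj (p $ (i*d+r)) * A $$ (i,j) * q $ (j*d+r))"
    using A q by (intro sum.cong refl) (simp del: index_mult_mat_vec add: kron_mv sum_distrib_left mult.assoc)
  also have "\<dots> = (\<Sum>r<d. \<Sum>i<k. \<Sum>j<k. cnj (p $ (i*d+r)) * A $$ (i,j) * q $ (j*d+r))"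
    by (rule sum.swap)
  finally show ?thesis .
qed


lemma mm_index: assumes "A \<in> carrier_mat n m" "B \<in> carrier_mat m nc" "i < n" "j < nc"
  shows "(A * B) $$ (i,j) = (\<Sum>k<m. A $$ (i,k) * B $$ (k,j))"
proof -
  have "(A * B) $$ (i,j) = row A i \<bullet> col B j" using assms by simp
  also have "\<dots> = (\<Sum>k\<in>{0..<m}. row A i $ k * col B j $ k)" using assms unfolding scalar_prod_def by simp
  also have "\<dots> = (\<Sum>k<m. A $$ (i,k) * B $$ (k,j))" unfolding atLeast0LessThan
    using assms by (intro sum.cong refl) simp
  finally show ?thesis .
qed

definition outer :: "nat \<Rightarrow> complex vec \<Rightarrow> complex mat" where
  "outer N u = mat N N (\<lambda>(p,q). u $ p * cnj (u $ q))"

lemma outer_carrier[simp]: "outer N u \<in> carrier_mat N N" unfolding outer_def by simp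

lemma outer_index: "p < N \<Longrightarrow> q < N \<Longrightarrow> outer N u $$ (p,q) = u $ p * cnj (u $ q)"
  unfolding outer_def by simp

lemma conj_outer:
  assumes V: "V \<in> carrier_mat D N" and u: "u \<in> carrier_vec N" and a: "a < D" and b: "b < D"
  shows "(V * outer N u * mat_adjoint V) $$ (a,b) = (V *\<^sub>v u) $ a * cnj ((V *\<^sub>v u) $ b)"
proof -
  have VX: "(V * outer N u) $$ (c,q) = (V *\<^sub>v u) $ c * cnj (u $ q)" if q: "q < N" and c: "c < D" for q c
  proof -
    have "(V * outer N u) $$ (c,q) = (\<Sum>p<N. V $$ (c,p) * outer N u $$ (p,q))"
      by (rule mm_index[OF V outer_carrier c q])
    also have "\<dots> = (\<Sum>p<N. V $$ (c,p) * u $ p) * cnj (u $ q)"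
      unfolding sum_distrib_right using q by (intro sum.cong refl) (simp add: outer_index mult.assoc)
    also have "\<dots> = (V *\<^sub>v u) $ c * cnj (u $ q)" using mv_index[OF V u c] by simp
    finally show ?thesis .
  qed
  have VXc: "V * outer N u \<in> carrier_mat D N" using V by simp
  have "(V * outer N u * mat_adjoint V) $$ (a,b) = (\<Sum>q<N. (V * outer N u) $$ (a,q) * mat_adjoint V $$ (q,b))"
    by (rule mm_index[OF VXc adj_carrier[OF V] a b])
  also have "\<dots> = (\<Sum>q<N. (V *\<^sub>v u) $ a * cnj (u $ q) * cnj (V $$ (b,q)))"
    using V b a by (intro sum.cong refl) (simp add: VX)
  also have "\<dots> = (V *\<^sub>v u) $ a * cnj (\<Sum>q<N. V $$ (b,q) * u $ q)"
  proof -
    have "(\<Sum>q<N. (V *\<^sub>v u) $ a * cnj (u $ q) * cnj (V $$ (b,q))) = (\<Sum>q<N. (V *\<^sub>v u) $ a * cnj (V $$ (b,q) * u $ q))"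
      by (intro sum.cong refl) (simp add: ac_simps)
    also have "\<dots> = (V *\<^sub>v u) $ a * (\<Sum>q<N. cnj (V $$ (b,q) * u $ q))" by (simp only: sum_distrib_left)
    also have "\<dots> = (V *\<^sub>v u) $ a * cnj (\<Sum>q<N. V $$ (b,q) * u $ q)" by (simp only: cnj_sum)
    finally show ?thesis .
  qed
  also have "\<dots> = (V *\<^sub>v u) $ a * cnj ((V *\<^sub>v u) $ b)" using mv_index[OF V u b] by simp
  finally show ?thesis .
qed

lemma mtrace_outer:
  assumes M: "M \<in> carrier_mat N N" and u: "u \<in> carrier_vec N"
  shows "mtrace (M * outer N u) = inner u (M *\<^sub>v u)"
proof -
  have MX: "M * outer N u \<in> carrier_mat N N" using M by simp
  have dM: "dim_vec (M *\<^sub>v u) = N" using M by simp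
  have "mtrace (M * outer N u) = (\<Sum>p<N. (M * outer N u) $$ (p,p))" unfolding mtrace_def using MX M by simp
  also have "\<dots> = (\<Sum>p<N. \<Sum>q<N. M $$ (p,q) * (u $ q * cnj (u $ p)))"
    using M by (intro sum.cong refl) (simp add: mm_index[OF M outer_carrier] outer_index)
  also have "\<dots> = (\<Sum>p<N. cnj (u $ p) * (\<Sum>q<N. M $$ (p,q) * u $ q))"
    by (intro sum.cong refl) (simp add: sum_distrib_left mult.commute mult.left_commute)
  also have "\<dots> = (\<Sum>p<N. cnj (u $ p) * (M *\<^sub>v u) $ p)"
    using M u by (intro sum.cong refl) (simp del: index_mult_mat_vec add: mv_index)
  also have "\<dots> = inner u (M *\<^sub>v u)" unfolding inner_def dM ..
  finally show ?thesis .
qed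

lemma stine_form:
  assumes V: "V \<in> carrier_mat (k*d) N"
    and MC: "\<And>t. t < l \<Longrightarrow> M t \<in> carrier_mat N N"
    and SC: "\<And>t. t < l \<Longrightarrow> \<sigma> t \<in> carrier_mat k k"
    and A: "A \<in> carrier_mat k k"
    and Phi: "\<And>\<rho>. \<Phi> \<rho> = msum k k (\<lambda>i. mtrace (M i * \<rho>) \<cdot>\<^sub>m \<sigma> i) {..<l}"
    and stine: "\<And>X. X \<in> carrier_mat N N \<Longrightarrow> \<Phi> X = ptrace2 k d (V * X * mat_adjoint V)"
    and u: "u \<in> carrier_vec N"
  shows "inner (V *\<^sub>v u) (kron A (1\<^sub>m d) *\<^sub>v (V *\<^sub>v u))
     = (\<Sum>t<l. inner u (M t *\<^sub>v u) * (\<Sum>i<k. \<Sum>j<k. A $$ (i,j) * \<sigma> t $$ (j,i)))"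
proof -
  define w where "w = V *\<^sub>v u"
  have w: "w \<in> carrier_vec (k*d)" unfolding w_def using V u by simp
  define X where "X = outer N u"
  have X: "X \<in> carrier_mat N N" unfolding X_def by simp
  have PhiE: "\<Phi> X $$ (j,i) = (\<Sum>r<d. w $ (j*d+r) * cnj (w $ (i*d+r)))" if i: "i < k" and j: "j < k" for i j
  proof -
    have "\<Phi> X $$ (j,i) = ptrace2 k d (V * X * mat_adjoint V) $$ (j,i)" using stine[OF X] by simp
    also have "\<dots> = (\<Sum>r<d. (V * X * mat_adjoint V) $$ (j*d+r, i*d+r))"
      unfolding ptrace2_def using i j by simp
    also have "\<dots> = (\<Sum>r<d. w $ (j*d+r) * cnj (w $ (i*d+r)))"
      unfolding X_def w_def using i j by (intro sum.cong refl) (simp add: conj_outer[OF V u] lt_aux)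
    finally show ?thesis .
  qed
  have PhiE2: "\<Phi> X $$ (j,i) = (\<Sum>t<l. inner u (M t *\<^sub>v u) * \<sigma> t $$ (j,i))" if i: "i < k" and j: "j < k" for i j
  proof -
    have "\<Phi> X $$ (j,i) = (\<Sum>t<l. (mtrace (M t * X) \<cdot>\<^sub>m \<sigma> t) $$ (j,i))"
      unfolding Phi by (rule msum_index[OF j i])
    also have "\<dots> = (\<Sum>t<l. inner u (M t *\<^sub>v u) * \<sigma> t $$ (j,i))"
    proof (intro sum.cong refl)
      fix t assume "t \<in> {..<l}"
      hence t: "t < l" by simp
      have tr: "mtrace (M t * X) = inner u (M t *\<^sub>v u)" unfolding X_def by (rule mtrace_outer[OF MC[OF t] u])
      show "(mtrace (M t * X) \<cdot>\<^sub>m \<sigma> t) $$ (j,i) = inner u (M t *\<^sub>v u) * \<sigma> t $$ (j,i)"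
        using SC[OF t] i j unfolding tr by simp
    qed
    finally show ?thesis .
  qed
  have "inner w (kron A (1\<^sub>m d) *\<^sub>v w) = (\<Sum>r<d. \<Sum>i<k. \<Sum>j<k. cnj (w $ (i*d+r)) * A $$ (i,j) * w $ (j*d+r))"
    by (rule kron_form[OF A w w])
  also have "\<dots> = (\<Sum>i<k. \<Sum>r<d. \<Sum>j<k. cnj (w $ (i*d+r)) * A $$ (i,j) * w $ (j*d+r))"
    by (rule sum.swap)
  also have "\<dots> = (\<Sum>i<k. \<Sum>j<k. \<Sum>r<d. cnj (w $ (i*d+r)) * A $$ (i,j) * w $ (j*d+r))"
    by (rule sum.cong[OF refl], rule sum.swap)
  also have "\<dots> = (\<Sum>i<k. \<Sum>j<k. A $$ (i,j) * (\<Sum>r<d. w $ (j*d+r) * cnj (w $ (i*d+r))))"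
    by (intro sum.cong refl) (simp add: sum_distrib_left mult.commute mult.left_commute)
  also have "\<dots> = (\<Sum>i<k. \<Sum>j<k. A $$ (i,j) * (\<Sum>t<l. inner u (M t *\<^sub>v u) * \<sigma> t $$ (j,i)))"
    by (intro sum.cong refl) (simp add: PhiE[symmetric] PhiE2)
  also have "\<dots> = (\<Sum>i<k. \<Sum>j<k. \<Sum>t<l. inner u (M t *\<^sub>v u) * (A $$ (i,j) * \<sigma> t $$ (j,i)))"
    by (intro sum.cong refl) (simp add: sum_distrib_left mult.commute mult.left_commute)
  also have "\<dots> = (\<Sum>i<k. \<Sum>t<l. \<Sum>j<k. inner u (M t *\<^sub>v u) * (A $$ (i,j) * \<sigma> t $$ (j,i)))"
    by (rule sum.cong[OF refl], rule sum.swap)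
  also have "\<dots> = (\<Sum>t<l. \<Sum>i<k. \<Sum>j<k. inner u (M t *\<^sub>v u) * (A $$ (i,j) * \<sigma> t $$ (j,i)))"
    by (rule sum.swap)
  also have "\<dots> = (\<Sum>t<l. inner u (M t *\<^sub>v u) * (\<Sum>i<k. \<Sum>j<k. A $$ (i,j) * \<sigma> t $$ (j,i)))"
    by (simp add: sum_distrib_left)
  finally show ?thesis unfolding w_def .
qed


lemma count_image_ge: "count A x \<le> count (image_mset f A) (f x)"
  by (induct A) auto

lemma sorted_top:
  fixes xs :: "real list"
  assumes "sorted_wrt (\<ge>) xs" "\<forall>x\<in>set xs. x \<le> c" "m \<le> count (mset xs) c" "j < m"
  shows "xs ! j = c"
  using assms
proof (induct xs arbitrary: m j)
  case Nil thus ?case by simp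
next
  case (Cons x xs)
  show ?case
  proof (cases "x = c")
    case True
    show ?thesis
    proof (cases j)
      case 0 thus ?thesis using True by simp
    next
      case (Suc j')
      have "xs ! j' = c"
        using Cons.prems True Suc by (intro Cons.hyps[of "m - 1"]) auto
      thus ?thesis using Suc by simp
    qed
  next
    case False
    hence "x < c" using Cons.prems(2) by auto
    hence "\<forall>y\<in>set xs. y < c" using Cons.prems(1) by auto
    hence "count (mset (x # xs)) c = 0" using \<open>x < c\<close> by (auto simp: count_eq_zero_iff)
    thus ?thesis using Cons.prems(3,4) by simp
  qed
qed

lemma eigs_desc_top:
  assumes up: "\<And>x. x \<in># image_mset Re (proots (char_poly H)) \<Longrightarrow> x \<le> c"
    and cnt: "m \<le> count (image_mset Re (proots (char_poly H))) c" and j: "j < m"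
  shows "eigs_desc H ! j = c"
proof -
  define E where "E = image_mset Re (proots (char_poly H))"
  have s: "sorted_wrt (\<ge>) (rev (sorted_list_of_multiset E))"
    unfolding sorted_wrt_rev using sorted_sorted_list_of_multiset[of E] by (simp add: sorted_wrt_iff_nth_less)
  show ?thesis unfolding eigs_desc_def E_def[symmetric]
    by (rule sorted_top[OF s _ _ j]) (use up cnt in \<open>auto simp: E_def\<close>)
qed

lemma kron_herm:
  assumes A: "A \<in> carrier_mat k k" and h: "mat_adjoint A = A"
  shows "mat_adjoint (kron A (1\<^sub>m d)) = kron A (1\<^sub>m d)"
proof (rule eq_matI)
  fix a b assume a: "a < dim_row (kron A (1\<^sub>m d))" and b: "b < dim_col (kron A (1\<^sub>m d))"
  hence a': "a < k*d" and b': "b < k*d" using A by auto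
  hence ad: "a div d < k" "b div d < k" using A by (auto simp: less_mult_imp_div_less)
  have Aij: "A $$ (i,j) = cnj (A $$ (j,i))" if "i < k" "j < k" for i j
  proof -
    have "A $$ (i,j) = mat_adjoint A $$ (i,j)" using h by simp
    also have "\<dots> = cnj (A $$ (j,i))" using A that by simp
    finally show ?thesis .
  qed
  have dpos: "0 < d" using a' by (cases d) auto
  have "mat_adjoint (kron A (1\<^sub>m d)) $$ (a,b) = cnj (kron A (1\<^sub>m d) $$ (b,a))"
    using a' b' A by (intro adj_index) auto
  also have "\<dots> = cnj (A $$ (b div d, a div d) * 1\<^sub>m d $$ (b mod d, a mod d))"
    unfolding kron_def using a' b' A by simp
  also have "\<dots> = A $$ (a div d, b div d) * 1\<^sub>m d $$ (a mod d, b mod d)"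
    using Aij[OF ad] dpos by (simp add: one_mat_def)
  also have "\<dots> = kron A (1\<^sub>m d) $$ (a,b)"
    unfolding kron_def using a' b' A by simp
  finally show "mat_adjoint (kron A (1\<^sub>m d)) $$ (a,b) = kron A (1\<^sub>m d) $$ (a,b)" .
qed (use A in auto)

lemma kron_psd:
  assumes A: "psd k A" and w: "w \<in> carrier_vec (k*d)"
  shows "0 \<le> Re (inner w (kron A (1\<^sub>m d) *\<^sub>v w))"
proof -
  have AC: "A \<in> carrier_mat k k" using A unfolding psd_def by simp
  define x where "x = (\<lambda>r. vec k (\<lambda>i. w $ (i*d+r)))"
  have x: "x r \<in> carrier_vec k" for r unfolding x_def by simp
  have ix: "inner (x r) (A *\<^sub>v x r) = (\<Sum>i<k. \<Sum>j<k. cnj (w $ (i*d+r)) * A $$ (i,j) * w $ (j*d+r))" for r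
  proof -
    have dA: "dim_vec (A *\<^sub>v x r) = k" using AC by simp
    have "inner (x r) (A *\<^sub>v x r) = (\<Sum>i<k. cnj (x r $ i) * (A *\<^sub>v x r) $ i)" unfolding inner_def dA ..
    also have "\<dots> = (\<Sum>i<k. cnj (x r $ i) * (\<Sum>j<k. A $$ (i,j) * x r $ j))"
      using AC x by (intro sum.cong refl) (simp del: index_mult_mat_vec add: mv_index)
    also have "\<dots> = (\<Sum>i<k. \<Sum>j<k. cnj (w $ (i*d+r)) * A $$ (i,j) * w $ (j*d+r))"
      unfolding x_def by (intro sum.cong refl) (simp add: sum_distrib_left mult.assoc)
    finally show ?thesis .
  qed
  have "inner w (kron A (1\<^sub>m d) *\<^sub>v w) = (\<Sum>r<d. inner (x r) (A *\<^sub>v x r))"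
    unfolding kron_form[OF AC w w] ix ..
  hence "Re (inner w (kron A (1\<^sub>m d) *\<^sub>v w)) = (\<Sum>r<d. Re (inner (x r) (A *\<^sub>v x r)))" by simp
  also have "\<dots> \<ge> 0" by (intro sum_nonneg psd_form[OF A x])
  finally show ?thesis by simp
qed


definition coef :: "nat \<Rightarrow> complex mat \<Rightarrow> (nat \<Rightarrow> complex mat) \<Rightarrow> nat \<Rightarrow> complex" where
  "coef k A \<sigma> t = (\<Sum>i<k. \<Sum>j<k. A $$ (i,j) * \<sigma> t $$ (j,i))"

locale chan =
  fixes k l N d :: nat and \<sigma> :: "nat \<Rightarrow> complex mat" and M :: "nat \<Rightarrow> complex mat"
    and \<Phi> :: "complex mat \<Rightarrow> complex mat" and V :: "complex mat"
  assumes states: "\<And>i. i < l \<Longrightarrow> \<sigma> i \<in> density k"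
    and psdM: "\<And>i. i < l \<Longrightarrow> psd N (M i)"
    and sumM: "msum N N M {..<l} = 1\<^sub>m N"
    and Phi: "\<And>\<rho>. \<Phi> \<rho> = msum k k (\<lambda>i. mtrace (M i * \<rho>) \<cdot>\<^sub>m \<sigma> i) {..<l}"
    and VC: "V \<in> carrier_mat (k*d) N"
    and iso: "mat_adjoint V * V = 1\<^sub>m N"
    and stine: "\<And>X. X \<in> carrier_mat N N \<Longrightarrow> \<Phi> X = ptrace2 k d (V * X * mat_adjoint V)"
begin

lemma MC: "t < l \<Longrightarrow> M t \<in> carrier_mat N N"
  using psdM unfolding psd_def by blast

lemma SC: "t < l \<Longrightarrow> \<sigma> t \<in> carrier_mat k k"
  using states unfolding density_def psd_def by blast

lemma c_real: assumes t: "t < l" and u: "u \<in> carrier_vec N"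
  shows "inner u (M t *\<^sub>v u) = of_real (Re (inner u (M t *\<^sub>v u)))"
proof -
  have "Im (inner u (M t *\<^sub>v u)) = 0"
    by (rule herm_real[OF _ u]) (rule psd_herm[OF psdM[OF t]])
  thus ?thesis by (simp add: complex_eq_iff)
qed

lemma c_nonneg: "t < l \<Longrightarrow> u \<in> carrier_vec N \<Longrightarrow> 0 \<le> Re (inner u (M t *\<^sub>v u))"
  using psd_form psdM by blast

lemma c_sum: "u \<in> carrier_vec N \<Longrightarrow> (\<Sum>t<l. inner u (M t *\<^sub>v u)) = inner u u"
  by (rule povm_inner[OF MC sumM])

lemma c_le: assumes i: "i < l" and u: "u \<in> carrier_vec N"
  shows "Re (inner u (M i *\<^sub>v u)) \<le> Re (inner u u)"
proof -
  have "Re (inner u (M i *\<^sub>v u)) \<le> (\<Sum>t<l. Re (inner u (M t *\<^sub>v u)))"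
    using i c_nonneg[OF _ u] by (intro member_le_sum) auto
  also have "\<dots> = Re (inner u u)" using c_sum[OF u] by (metis Re_sum)
  finally show ?thesis .
qed

lemma c_eig: assumes i: "i < l" and u: "u \<in> carrier_vec N" and Mu: "M i *\<^sub>v u = u" and t: "t < l" "t \<noteq> i"
  shows "inner u (M t *\<^sub>v u) = 0"
proof -
  have "(\<Sum>s<l. Re (inner u (M s *\<^sub>v u))) = Re (inner u u)" using c_sum[OF u] by (metis Re_sum)
  also have "\<dots> = Re (inner u (M i *\<^sub>v u))" unfolding Mu ..
  finally have eq: "(\<Sum>s<l. Re (inner u (M s *\<^sub>v u))) = Re (inner u (M i *\<^sub>v u))" .
  have "(\<Sum>s<l. Re (inner u (M s *\<^sub>v u))) = Re (inner u (M i *\<^sub>v u)) + (\<Sum>s\<in>{..<l}-{i}. Re (inner u (M s *\<^sub>v u)))"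
    using i by (subst sum.remove[of _ i]) auto
  with eq have "(\<Sum>s\<in>{..<l}-{i}. Re (inner u (M s *\<^sub>v u))) = 0" by simp
  hence "\<forall>s\<in>{..<l}-{i}. Re (inner u (M s *\<^sub>v u)) = 0"
    using c_nonneg[OF _ u] by (subst (asm) sum_nonneg_eq_0_iff) auto
  hence "Re (inner u (M t *\<^sub>v u)) = 0" using t by auto
  thus ?thesis using c_real[OF t(1) u] by simp
qed

lemma part1: assumes i: "i < l" and n1: "op_norm (M i) = 1"
  shows "\<exists>u \<in> carrier_vec N. u \<noteq> 0\<^sub>v N \<and> M i *\<^sub>v u = u"
  by (rule eigen_one[OF MC[OF i] psdM[OF i] c_le[OF i] n1])

lemma dim1_pos: assumes i: "i < l" and n1: "op_norm (M i) = 1"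
  shows "1 \<le> dim1 (M i)"
proof -
  obtain u where u: "u \<in> carrier_vec N" "u \<noteq> 0\<^sub>v N" "M i *\<^sub>v u = u" using part1[OF i n1] by blast
  have "M i *\<^sub>v u = 1 \<cdot>\<^sub>v u" using u by simp
  thus ?thesis unfolding dim1_def by (intro eig_dim_pos[OF MC[OF i] u(1,2)])
qed

lemma form_eq: assumes A: "A \<in> carrier_mat k k" and u: "u \<in> carrier_vec N"
  shows "inner (V *\<^sub>v u) (kron A (1\<^sub>m d) *\<^sub>v (V *\<^sub>v u)) = (\<Sum>t<l. inner u (M t *\<^sub>v u) * coef k A \<sigma> t)"
  unfolding coef_def by (rule stine_form[OF VC MC SC A Phi stine u])

lemma form_bound: assumes A: "A \<in> carrier_mat k k" and u: "u \<in> carrier_vec N"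
  and c: "\<And>t. t < l \<Longrightarrow> Re (coef k A \<sigma> t) \<le> c"
  shows "Re (inner (V *\<^sub>v u) (kron A (1\<^sub>m d) *\<^sub>v (V *\<^sub>v u))) \<le> c * Re (inner u u)"
proof -
  have "Re (inner (V *\<^sub>v u) (kron A (1\<^sub>m d) *\<^sub>v (V *\<^sub>v u))) = (\<Sum>t<l. Re (inner u (M t *\<^sub>v u)) * Re (coef k A \<sigma> t))"
    unfolding form_eq[OF A u] Re_sum
  proof (intro sum.cong refl)
    fix t assume "t \<in> {..<l}"
    hence t: "t < l" by simp
    show "Re (inner u (M t *\<^sub>v u) * coef k A \<sigma> t) = Re (inner u (M t *\<^sub>v u)) * Re (coef k A \<sigma> t)"
      by (subst c_real[OF t u]) simp
  qed
  also have "\<dots> \<le> (\<Sum>t<l. Re (inner u (M t *\<^sub>v u)) * c)"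
    by (intro sum_mono mult_left_mono c c_nonneg u) auto
  also have "\<dots> = c * Re (inner u u)" using c_sum[OF u]
    by (metis Re_sum mult.commute sum_distrib_right)
  finally show ?thesis .
qed

lemma eig_form: assumes A: "A \<in> carrier_mat k k" and i: "i < l" and u: "u \<in> carrier_vec N" and Mu: "M i *\<^sub>v u = u"
  shows "inner (V *\<^sub>v u) (kron A (1\<^sub>m d) *\<^sub>v (V *\<^sub>v u)) = inner u u * coef k A \<sigma> i"
proof -
  have "inner (V *\<^sub>v u) (kron A (1\<^sub>m d) *\<^sub>v (V *\<^sub>v u)) = (\<Sum>t<l. inner u (M t *\<^sub>v u) * coef k A \<sigma> t)"
    by (rule form_eq[OF A u])
  also have "\<dots> = inner u (M i *\<^sub>v u) * coef k A \<sigma> i"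
  proof -
    have "(\<Sum>t<l. inner u (M t *\<^sub>v u) * coef k A \<sigma> t) = inner u (M i *\<^sub>v u) * coef k A \<sigma> i
       + (\<Sum>t\<in>{..<l}-{i}. inner u (M t *\<^sub>v u) * coef k A \<sigma> t)"
      using i by (subst sum.remove[of _ i]) auto
    moreover have "(\<Sum>t\<in>{..<l}-{i}. inner u (M t *\<^sub>v u) * coef k A \<sigma> t) = 0"
      using c_eig[OF i u Mu] by (intro sum.neutral) auto
    ultimately show ?thesis by simp
  qed
  also have "inner u (M i *\<^sub>v u) = inner u u" unfolding Mu ..
  finally show ?thesis .
qed

end


lemma pow1: "(A :: 'a :: semiring_1 mat) ^\<^sub>m 1 = A"
  by (simp add: One_nat_def)

lemma charm_mv: assumes X: "X \<in> carrier_mat n n" and v: "v \<in> carrier_vec n"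
  shows "char_matrix X e *\<^sub>v v = X *\<^sub>v v - e \<cdot>\<^sub>v v"
proof (rule eq_vecI)
  have C: "char_matrix X e \<in> carrier_mat n n" using X by simp
  have dC: "dim_row (char_matrix X e) = n" using C by (simp add: carrier_matD)
  show "dim_vec (char_matrix X e *\<^sub>v v) = dim_vec (X *\<^sub>v v - e \<cdot>\<^sub>v v)" using X dC v by simp
  fix i assume "i < dim_vec (X *\<^sub>v v - e \<cdot>\<^sub>v v)"
  hence i: "i < n" using X v by simp
  have "(char_matrix X e *\<^sub>v v) $ i = (\<Sum>j<n. char_matrix X e $$ (i,j) * v $ j)" by (rule mv_index[OF C v i])
  also have "\<dots> = (\<Sum>j<n. X $$ (i,j) * v $ j - (if i = j then e * v $ j else 0))"
    using X i unfolding char_matrix_def by (intro sum.cong refl) (auto simp: algebra_simps)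
  also have "\<dots> = (\<Sum>j<n. X $$ (i,j) * v $ j) - e * v $ i"
    using i by (simp add: sum_subtractf)
  also have "\<dots> = (X *\<^sub>v v - e \<cdot>\<^sub>v v) $ i" using mv_index[OF X v i] X v i by simp
  finally show "(char_matrix X e *\<^sub>v v) $ i = (X *\<^sub>v v - e \<cdot>\<^sub>v v) $ i" .
qed

lemma inner_adj2: assumes V: "V \<in> carrier_mat D N" and u: "u \<in> carrier_vec N" and z: "z \<in> carrier_vec D"
  shows "inner u (mat_adjoint V *\<^sub>v z) = inner (V *\<^sub>v u) z"
proof -
  have "inner z (V *\<^sub>v u) = inner (mat_adjoint V *\<^sub>v z) u" by (rule inner_adj[OF V z u])
  hence "cnj (inner z (V *\<^sub>v u)) = cnj (inner (mat_adjoint V *\<^sub>v z) u)" by simp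
  thus ?thesis using inner_cnj[of u "mat_adjoint V *\<^sub>v z"] inner_cnj[of "V *\<^sub>v u" z] V u z by simp
qed

lemma inner_pos: assumes u: "u \<in> carrier_vec N" "u \<noteq> 0\<^sub>v N" shows "0 < Re (inner u u)"
proof -
  have "inner u u \<noteq> 0" using inner_self_zero[OF u(1)] u(2) by blast
  hence "Re (inner u u) \<noteq> 0" using inner_self_Im[of u] by (simp add: complex_eq_iff)
  thus ?thesis using inner_self_ge0[of u] by simp
qed

lemma inner_ofreal: "inner u u = of_real (Re (inner u u))"
  using inner_self_Im[of u] by (simp add: complex_eq_iff)

context chan begin

lemma Vmv: "u \<in> carrier_vec N \<Longrightarrow> V *\<^sub>v u \<in> carrier_vec (k*d)"
  using VC by (rule mult_mat_vec_carrier)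

lemma VAmv: "z \<in> carrier_vec (k*d) \<Longrightarrow> mat_adjoint V *\<^sub>v z \<in> carrier_vec N"
  using adj_carrier[OF VC] by (rule mult_mat_vec_carrier)

lemma Kmv: "A \<in> carrier_mat k k \<Longrightarrow> z \<in> carrier_vec (k*d) \<Longrightarrow> kron A (1\<^sub>m d) *\<^sub>v z \<in> carrier_vec (k*d)"
  using kron_carrier by (rule mult_mat_vec_carrier)

lemma iso_mv: "u \<in> carrier_vec N \<Longrightarrow> mat_adjoint V *\<^sub>v (V *\<^sub>v u) = u"
  using VC iso by (metis adj_carrier assoc_mult_mat_vec one_mult_mat_vec)

lemma inner_iso: "u \<in> carrier_vec N \<Longrightarrow> inner (V *\<^sub>v u) (V *\<^sub>v u) = inner u u"
  using inner_adj2[OF VC, of u "V *\<^sub>v u"] iso_mv VC by simp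

lemma coef_nonneg: assumes A: "psd k A" and i: "i < l" and n1: "op_norm (M i) = 1"
  shows "0 \<le> Re (coef k A \<sigma> i)"
proof -
  have AC: "A \<in> carrier_mat k k" using A unfolding psd_def by simp
  obtain u where u: "u \<in> carrier_vec N" "u \<noteq> 0\<^sub>v N" "M i *\<^sub>v u = u" using part1[OF i n1] by blast
  have w: "V *\<^sub>v u \<in> carrier_vec (k*d)" using VC u by simp
  have "0 \<le> Re (inner (V *\<^sub>v u) (kron A (1\<^sub>m d) *\<^sub>v (V *\<^sub>v u)))" by (rule kron_psd[OF A w])
  also have "\<dots> = Re (inner u u) * Re (coef k A \<sigma> i)"
    unfolding eig_form[OF AC i u(1) u(3)] by (subst inner_ofreal) simp
  finally show ?thesis using inner_pos[OF u(1,2)] by (simp add: zero_le_mult_iff)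
qed

definition H :: "complex mat \<Rightarrow> complex mat" where
  "H A = V * mat_adjoint V * kron A (1\<^sub>m d) * (V * mat_adjoint V)"

lemma H_carrier: "A \<in> carrier_mat k k \<Longrightarrow> H A \<in> carrier_mat (k*d) (k*d)"
  unfolding H_def using VC by (auto intro!: mult_carrier_mat kron_carrier)

lemma H_mv: assumes A: "A \<in> carrier_mat k k" and v: "v \<in> carrier_vec (k*d)"
  shows "H A *\<^sub>v v = V *\<^sub>v (mat_adjoint V *\<^sub>v (kron A (1\<^sub>m d) *\<^sub>v (V *\<^sub>v (mat_adjoint V *\<^sub>v v))))"
proof -
  have K: "kron A (1\<^sub>m d) \<in> carrier_mat (k*d) (k*d)" by (rule kron_carrier[OF A])
  have dK: "dim_row (kron A (1\<^sub>m d)) = k*d" "dim_col (kron A (1\<^sub>m d)) = k*d" using K by auto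
  have VA: "mat_adjoint V \<in> carrier_mat N (k*d)" using VC by simp
  have P: "V * mat_adjoint V \<in> carrier_mat (k*d) (k*d)" using VC VA by simp
  have "H A *\<^sub>v v = (V * mat_adjoint V * kron A (1\<^sub>m d)) *\<^sub>v ((V * mat_adjoint V) *\<^sub>v v)"
  proof -
    have PK: "V * mat_adjoint V * kron A (1\<^sub>m d) \<in> carrier_mat (k*d) (k*d)" using P K by simp
    show ?thesis unfolding H_def using PK P v by (rule assoc_mult_mat_vec)
  qed
  also have "\<dots> = (V * mat_adjoint V) *\<^sub>v (kron A (1\<^sub>m d) *\<^sub>v ((V * mat_adjoint V) *\<^sub>v v))"
    using P K v by (intro assoc_mult_mat_vec) auto
  also have "(V * mat_adjoint V) *\<^sub>v v = V *\<^sub>v (mat_adjoint V *\<^sub>v v)"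
    using VC VA v by (intro assoc_mult_mat_vec) auto
  also have "(V * mat_adjoint V) *\<^sub>v (kron A (1\<^sub>m d) *\<^sub>v (V *\<^sub>v (mat_adjoint V *\<^sub>v v)))
      = V *\<^sub>v (mat_adjoint V *\<^sub>v (kron A (1\<^sub>m d) *\<^sub>v (V *\<^sub>v (mat_adjoint V *\<^sub>v v))))"
    using VC VA v K Kmv[OF A Vmv[OF VAmv[OF v]]] by (intro assoc_mult_mat_vec) auto
  finally show ?thesis .
qed

lemma upper: assumes A: "psd k A" and c0: "0 \<le> c"
  and c: "\<And>t. t < l \<Longrightarrow> Re (coef k A \<sigma> t) \<le> c"
  and x: "x \<in># proots (char_poly (H A))"
  shows "Re x \<le> c"
proof (cases "x = 0")
  case True thus ?thesis using c0 by simp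
next
  case False
  have AC: "A \<in> carrier_mat k k" using A unfolding psd_def by simp
  have HC: "H A \<in> carrier_mat (k*d) (k*d)" by (rule H_carrier[OF AC])
  have K: "kron A (1\<^sub>m d) \<in> carrier_mat (k*d) (k*d)" by (rule kron_carrier[OF AC])
  have dK: "dim_row (kron A (1\<^sub>m d)) = k*d" "dim_col (kron A (1\<^sub>m d)) = k*d" using K by auto
  have VA: "mat_adjoint V \<in> carrier_mat N (k*d)" using VC by simp
  have cp: "char_poly (H A) \<noteq> 0" using degree_monic_char_poly[OF HC] by auto
  have "poly (char_poly (H A)) x = 0" using x cp by simp
  hence "eigenvalue (H A) x" using eigenvalue_root_char_poly[OF HC] by simp
  then obtain v where v: "v \<in> carrier_vec (k*d)" "v \<noteq> 0\<^sub>v (k*d)" "H A *\<^sub>v v = x \<cdot>\<^sub>v v"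
    unfolding eigenvalue_def eigenvector_def using HC by auto
  define u where "u = mat_adjoint V *\<^sub>v v"
  have u: "u \<in> carrier_vec N" unfolding u_def using VA v by simp
  define g where "g = mat_adjoint V *\<^sub>v (kron A (1\<^sub>m d) *\<^sub>v (V *\<^sub>v u))"
  have g: "g \<in> carrier_vec N" unfolding g_def by (intro VAmv Kmv[OF AC] Vmv u)
  have Hv: "H A *\<^sub>v v = V *\<^sub>v g" unfolding g_def u_def by (rule H_mv[OF AC v(1)])
  define y where "y = (1 / x) \<cdot>\<^sub>v g"
  have y: "y \<in> carrier_vec N" unfolding y_def using g by simp
  have vy: "v = V *\<^sub>v y"
  proof -
    have "v = (1/x) \<cdot>\<^sub>v (x \<cdot>\<^sub>v v)" using False by (simp add: smult_smult_assoc)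
    also have "\<dots> = (1/x) \<cdot>\<^sub>v (V *\<^sub>v g)" using v(3) Hv by simp
    also have "\<dots> = V *\<^sub>v y" unfolding y_def using VC g by (simp add: mult_mat_vec)
    finally show ?thesis .
  qed
  have uy: "u = y" unfolding u_def vy using iso_mv[OF y] .
  have vu: "v = V *\<^sub>v u" using vy uy by simp
  have u0: "u \<noteq> 0\<^sub>v N"
  proof
    assume "u = 0\<^sub>v N"
    hence "inner v v = 0" unfolding vu inner_iso[OF u] by (simp add: inner_def)
    hence "v = 0\<^sub>v (k*d)" by (rule inner_self_zero[OF v(1)])
    with v(2) show False ..
  qed
  have "x * inner v v = inner v (H A *\<^sub>v v)" unfolding v(3) by (simp add: inner_smult_right)
  also have "\<dots> = inner (V *\<^sub>v u) (V *\<^sub>v g)" unfolding Hv unfolding vu ..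
  also have "\<dots> = inner u (mat_adjoint V *\<^sub>v (V *\<^sub>v g))" using inner_adj2[OF VC u] VC g by simp
  also have "\<dots> = inner u g" using iso_mv[OF g] by simp
  also have "\<dots> = inner (V *\<^sub>v u) (kron A (1\<^sub>m d) *\<^sub>v (V *\<^sub>v u))"
    unfolding g_def by (rule inner_adj2[OF VC u Kmv[OF AC Vmv[OF u]]])
  finally have eq: "x * inner u u = inner (V *\<^sub>v u) (kron A (1\<^sub>m d) *\<^sub>v (V *\<^sub>v u))"
    unfolding vu inner_iso[OF u] .
  have "Re x * Re (inner u u) = Re (x * inner u u)" by (subst (2) inner_ofreal) simp
  also have "\<dots> \<le> c * Re (inner u u)" unfolding eq by (rule form_bound[OF AC u c])
  finally show ?thesis using inner_pos[OF u u0] by simp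
qed

end


lemma smult_one_mv: fixes c :: complex assumes x: "x \<in> carrier_vec n" shows "(c \<cdot>\<^sub>m 1\<^sub>m n) *\<^sub>v x = c \<cdot>\<^sub>v x"
proof (rule eq_vecI)
  show "dim_vec ((c \<cdot>\<^sub>m 1\<^sub>m n) *\<^sub>v x) = dim_vec (c \<cdot>\<^sub>v x)" using x by simp
  fix i assume "i < dim_vec (c \<cdot>\<^sub>v x)"
  hence i: "i < n" using x by simp
  have C: "c \<cdot>\<^sub>m 1\<^sub>m n \<in> carrier_mat n n" by simp
  have "((c \<cdot>\<^sub>m 1\<^sub>m n) *\<^sub>v x) $ i = (\<Sum>j<n. (c \<cdot>\<^sub>m 1\<^sub>m n) $$ (i,j) * x $ j)" by (rule mv_index[OF C x i])
  also have "\<dots> = (\<Sum>j<n. if i = j then c * x $ j else 0)" using i by (intro sum.cong refl) auto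
  also have "\<dots> = c * x $ i" using i by simp
  finally show "((c \<cdot>\<^sub>m 1\<^sub>m n) *\<^sub>v x) $ i = (c \<cdot>\<^sub>v x) $ i" using i x by simp
qed

context chan begin

lemma lower: assumes A: "psd k A"
  and c: "\<And>t. t < l \<Longrightarrow> Re (coef k A \<sigma> t) \<le> c"
  and i: "i < l" and ci: "Re (coef k A \<sigma> i) = c"
  shows "dim1 (M i) \<le> count (image_mset Re (proots (char_poly (H A)))) c"
proof -
  have AC: "A \<in> carrier_mat k k" and Ah: "mat_adjoint A = A" using A unfolding psd_def by auto
  define K where "K = kron A (1\<^sub>m d)"
  have K: "K \<in> carrier_mat (k*d) (k*d)" unfolding K_def by (rule kron_carrier[OF AC])
  have Kh: "mat_adjoint K = K" unfolding K_def by (rule kron_herm[OF AC Ah])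
  have VA: "mat_adjoint V \<in> carrier_mat N (k*d)" using VC by simp
  define G where "G = mat_adjoint V * K * V"
  have G: "G \<in> carrier_mat N N" unfolding G_def using mult_carrier_mat[OF mult_carrier_mat[OF VA K] VC] .
  have Gmv: "G *\<^sub>v x = mat_adjoint V *\<^sub>v (K *\<^sub>v (V *\<^sub>v x))" if x: "x \<in> carrier_vec N" for x
  proof -
    have VK: "mat_adjoint V * K \<in> carrier_mat N (k*d)" using VA K by simp
    have "G *\<^sub>v x = (mat_adjoint V * K) *\<^sub>v (V *\<^sub>v x)" unfolding G_def using VK VC x by (rule assoc_mult_mat_vec)
    also have "\<dots> = mat_adjoint V *\<^sub>v (K *\<^sub>v (V *\<^sub>v x))" using VA K Vmv[OF x] by (rule assoc_mult_mat_vec)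
    finally show ?thesis .
  qed
  have innerG: "inner x (G *\<^sub>v y) = inner (V *\<^sub>v x) (K *\<^sub>v (V *\<^sub>v y))" if "x \<in> carrier_vec N" "y \<in> carrier_vec N" for x y
    unfolding Gmv[OF that(2)] K_def by (rule inner_adj2[OF VC that(1) Kmv[OF AC Vmv[OF that(2)]]])
  define C where "C = of_real c \<cdot>\<^sub>m 1\<^sub>m N - G"
  have CC: "C \<in> carrier_mat N N" unfolding C_def using G by (intro minus_carrier_mat) auto
  have Cmv: "C *\<^sub>v x = of_real c \<cdot>\<^sub>v x - G *\<^sub>v x" if x: "x \<in> carrier_vec N" for x
    unfolding C_def using minus_mult_distrib_mat_vec[OF _ G x, of "of_real c \<cdot>\<^sub>m 1\<^sub>m N"] smult_one_mv[OF x] by simp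
  have innerC: "inner x (C *\<^sub>v y) = of_real c * inner x y - inner (V *\<^sub>v x) (K *\<^sub>v (V *\<^sub>v y))"
    if x: "x \<in> carrier_vec N" and y: "y \<in> carrier_vec N" for x y
  proof -
    have "inner x (C *\<^sub>v y) = inner x (of_real c \<cdot>\<^sub>v y) - inner x (G *\<^sub>v y)"
      unfolding Cmv[OF y] using G y by (intro inner_minus_right) simp
    thus ?thesis unfolding inner_smult_right innerG[OF x y] .
  qed
  have hermK: "inner p (K *\<^sub>v q) = cnj (inner q (K *\<^sub>v p))" if "p \<in> carrier_vec (k*d)" "q \<in> carrier_vec (k*d)" for p q
    by (rule herm_form[OF K Kh that])
  have hermC: "\<And>x y. x \<in> carrier_vec N \<Longrightarrow> y \<in> carrier_vec N \<Longrightarrow> inner x (C *\<^sub>v y) = cnj (inner y (C *\<^sub>v x))"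
  proof -
    fix x y :: "complex vec" assume x: "x \<in> carrier_vec N" and y: "y \<in> carrier_vec N"
    have "inner x (C *\<^sub>v y) = of_real c * inner x y - inner (V *\<^sub>v x) (K *\<^sub>v (V *\<^sub>v y))" by (rule innerC[OF x y])
    also have "\<dots> = of_real c * cnj (inner y x) - cnj (inner (V *\<^sub>v y) (K *\<^sub>v (V *\<^sub>v x)))"
      using inner_cnj[of x y] x y hermK[OF Vmv[OF x] Vmv[OF y]] by simp
    also have "\<dots> = cnj (inner y (C *\<^sub>v x))" unfolding innerC[OF y x] by simp
    finally show "inner x (C *\<^sub>v y) = cnj (inner y (C *\<^sub>v x))" .
  qed
  have ReC: "Re (inner x (C *\<^sub>v x)) = c * Re (inner x x) - Re (inner (V *\<^sub>v x) (kron A (1\<^sub>m d) *\<^sub>v (V *\<^sub>v x)))"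
    if x: "x \<in> carrier_vec N" for x
    unfolding innerC[OF x x] K_def by simp
  have posC: "\<And>x. x \<in> carrier_vec N \<Longrightarrow> 0 \<le> Re (inner x (C *\<^sub>v x))"
    using ReC form_bound[OF AC _ c] by simp
  have eig: "V *\<^sub>v w \<in> mat_kernel (char_matrix (H A) (of_real c) ^\<^sub>m 1)"
    if w: "w \<in> mat_kernel (char_matrix (M i) 1 ^\<^sub>m 1)" for w
  proof -
    have MiC: "M i \<in> carrier_mat N N" by (rule MC[OF i])
    have ch: "char_matrix (M i) 1 \<in> carrier_mat N N" using MiC by simp
    from w have wc: "w \<in> carrier_vec N" and w0: "char_matrix (M i) 1 *\<^sub>v w = 0\<^sub>v N"
      unfolding pow1 using mat_kernelD[OF ch] by auto
    have Mw: "M i *\<^sub>v w = w"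
    proof (rule eq_vecI)
      fix j assume "j < dim_vec w"
      hence j: "j < N" using wc by simp
      have "(char_matrix (M i) 1 *\<^sub>v w) $ j = 0" using w0 j by simp
      thus "(M i *\<^sub>v w) $ j = w $ j" unfolding charm_mv[OF MiC wc] using MiC wc j by simp
    qed (use MiC wc in simp)
    have "Re (inner w (C *\<^sub>v w)) = c * Re (inner w w) - Re (inner w w * coef k A \<sigma> i)"
      unfolding ReC[OF wc] eig_form[OF AC i wc Mw] ..
    also have "\<dots> = 0" using ci by (subst inner_ofreal) simp
    finally have "C *\<^sub>v w = 0\<^sub>v N" by (intro form_zero[OF CC hermC posC wc])
    hence Gw: "G *\<^sub>v w = of_real c \<cdot>\<^sub>v w"
    proof -
      assume "C *\<^sub>v w = 0\<^sub>v N"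
      hence z: "of_real c \<cdot>\<^sub>v w - G *\<^sub>v w = 0\<^sub>v N" using Cmv[OF wc] by simp
      show ?thesis
      proof (rule eq_vecI)
        fix j assume "j < dim_vec (of_real c \<cdot>\<^sub>v w)"
        hence j: "j < N" using wc by simp
        have "(of_real c \<cdot>\<^sub>v w - G *\<^sub>v w) $ j = 0" using z j by simp
        thus "(G *\<^sub>v w) $ j = (of_real c \<cdot>\<^sub>v w) $ j" using G wc j by simp
      qed (use G wc in simp)
    qed
    have HC: "H A \<in> carrier_mat (k*d) (k*d)" by (rule H_carrier[OF AC])
    have HVw: "H A *\<^sub>v (V *\<^sub>v w) = of_real c \<cdot>\<^sub>v (V *\<^sub>v w)"
    proof -
      have "H A *\<^sub>v (V *\<^sub>v w) = V *\<^sub>v (mat_adjoint V *\<^sub>v (K *\<^sub>v (V *\<^sub>v (mat_adjoint V *\<^sub>v (V *\<^sub>v w)))))"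
        unfolding K_def by (rule H_mv[OF AC Vmv[OF wc]])
      also have "\<dots> = V *\<^sub>v (G *\<^sub>v w)" unfolding iso_mv[OF wc] Gmv[OF wc] ..
      also have "\<dots> = of_real c \<cdot>\<^sub>v (V *\<^sub>v w)" unfolding Gw using VC wc by (simp add: mult_mat_vec)
      finally show ?thesis .
    qed
    have chH: "char_matrix (H A) (of_real c) \<in> carrier_mat (k*d) (k*d)" using HC by simp
    have "char_matrix (H A) (of_real c) *\<^sub>v (V *\<^sub>v w) = 0\<^sub>v (k*d)"
      unfolding charm_mv[OF HC Vmv[OF wc]] HVw using Vmv[OF wc] by simp
    thus ?thesis unfolding pow1 using mat_kernelI[OF chH Vmv[OF wc]] by simp
  qed
  have chM: "char_matrix (M i) 1 ^\<^sub>m 1 \<in> carrier_mat N N" unfolding pow1 using MC[OF i] by simp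
  have HC: "H A \<in> carrier_mat (k*d) (k*d)" by (rule H_carrier[OF AC])
  have chH: "char_matrix (H A) (of_real c) ^\<^sub>m 1 \<in> carrier_mat (k*d) (k*d)" unfolding pow1 using HC by simp
  have "dim1 (M i) = kernel.dim N (char_matrix (M i) 1 ^\<^sub>m 1)"
    unfolding dim1_def dim_gen_eigenspace_def kernel_dim_def using chM by simp
  also have "\<dots> \<le> kernel.dim (k*d) (char_matrix (H A) (of_real c) ^\<^sub>m 1)"
    by (rule kdim_mono[OF chM chH VC VA iso eig])
  also have "\<dots> = dim_gen_eigenspace (H A) (of_real c) 1"
    unfolding dim_gen_eigenspace_def kernel_dim_def using chH by simp
  also have "\<dots> \<le> Polynomial.order (of_real c) (char_poly (H A))" by (rule geo_le_alg[OF HC])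
  also have "\<dots> = count (proots (char_poly (H A))) (of_real c)"
    using degree_monic_char_poly[OF HC] by (subst count_proots) auto
  also have "\<dots> \<le> count (image_mset Re (proots (char_poly (H A)))) (Re (of_real c))"
    by (rule count_image_ge)
  finally show ?thesis by simp
qed

end


theorem proposition6p2:
  fixes k l :: nat
    and \<sigma> :: "nat \<Rightarrow> complex mat"
    and N :: "nat \<Rightarrow> nat"
    and M :: "nat \<Rightarrow> nat \<Rightarrow> complex mat"
    and \<Phi> :: "nat \<Rightarrow> complex mat \<Rightarrow> complex mat"
    and d :: "nat \<Rightarrow> nat"
    and V :: "nat \<Rightarrow> complex mat"
  assumes l_pos: "l \<ge> 1"
    and states: "\<And>i. i < l \<Longrightarrow> \<sigma> i \<in> density k"
    and povm_psd: "\<And>n i. i < l \<Longrightarrow> psd (N n) (M n i)"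
    and povm_sum: "\<And>n. msum (N n) (N n) (M n) {..<l} = 1\<^sub>m (N n)"
    and norm_one: "\<And>n i. i < l \<Longrightarrow> op_norm (M n i) = 1"
    and Phi_def: "\<And>n \<rho>. \<Phi> n \<rho> = msum k k (\<lambda>i. mtrace (M n i * \<rho>) \<cdot>\<^sub>m \<sigma> i) {..<l}"
    and V_carrier: "\<And>n. V n \<in> carrier_mat (k * d n) (N n)"
    and V_isometry: "\<And>n. mat_adjoint (V n) * V n = 1\<^sub>m (N n)"
    and stinespring: "\<And>n X. X \<in> carrier_mat (N n) (N n) \<Longrightarrow>
                         \<Phi> n X = ptrace2 k (d n) (V n * X * mat_adjoint (V n))"
  shows "1 \<le> liminf (\<lambda>n. enat (Min ((\<lambda>i. dim1 (M n i)) ` {..<l}))) \<and>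
         (\<forall>m::nat. enat m \<le> liminf (\<lambda>n. enat (Min ((\<lambda>i. dim1 (M n i)) ` {..<l})))
             \<longrightarrow> cond_C m k d (\<lambda>n. V n * mat_adjoint (V n)))"
proof -
  have ch: "chan k l (N n) (d n) \<sigma> (M n) (\<Phi> n) (V n)" for n
    unfolding chan_def using states povm_psd povm_sum Phi_def V_carrier V_isometry stinespring by blast
  have ne: "(\<lambda>i. dim1 (M n i)) ` {..<l} \<noteq> {}" for n using l_pos by (simp add: lessThan_empty_iff)
  have fin: "finite ((\<lambda>i. dim1 (M n i)) ` {..<l})" for n by simp
  have minpos: "1 \<le> Min ((\<lambda>i. dim1 (M n i)) ` {..<l})" for n
    using chan.dim1_pos[OF ch[of n]] norm_one by (subst Min_ge_iff[OF fin ne]) auto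
  have part1: "1 \<le> liminf (\<lambda>n. enat (Min ((\<lambda>i. dim1 (M n i)) ` {..<l})))"
    by (intro Liminf_bounded always_eventually allI) (use minpos in \<open>simp add: one_enat_def\<close>)
  have part2: "cond_C m k d (\<lambda>n. V n * mat_adjoint (V n))"
    if m: "enat m \<le> liminf (\<lambda>n. enat (Min ((\<lambda>i. dim1 (M n i)) ` {..<l})))" for m
  proof (cases "m = 0")
    case True thus ?thesis unfolding cond_C_def by simp
  next
    case False
    have "enat (m - 1) < enat m" using False by simp
    hence "eventually (\<lambda>n. enat (m - 1) < enat (Min ((\<lambda>i. dim1 (M n i)) ` {..<l}))) sequentially"
      using m unfolding le_Liminf_iff by blast
    hence ev: "eventually (\<lambda>n. m \<le> Min ((\<lambda>i. dim1 (M n i)) ` {..<l})) sequentially"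
      by (rule eventually_mono) (use False in auto)
    show ?thesis unfolding cond_C_def
    proof
      fix A assume Ad: "A \<in> density k"
      have A: "psd k A" using Ad unfolding density_def by simp
      define c where "c = Max ((\<lambda>t. Re (coef k A \<sigma> t)) ` {..<l})"
      have cge: "Re (coef k A \<sigma> t) \<le> c" if "t < l" for t unfolding c_def using that by (intro Max_ge) auto
      have "c \<in> (\<lambda>t. Re (coef k A \<sigma> t)) ` {..<l}" unfolding c_def using l_pos by (intro Max_in) (auto simp: lessThan_empty_iff)
      then obtain i0 where i0: "i0 < l" and ci0: "Re (coef k A \<sigma> i0) = c" by auto
      have c0: "0 \<le> c" using chan.coef_nonneg[OF ch A i0 norm_one[OF i0]] ci0 by simp
      show "\<exists>f. \<forall>j<m. (\<lambda>n. eigs_desc (V n * mat_adjoint (V n) * kron A (1\<^sub>m (d n)) * (V n * mat_adjoint (V n))) ! j) \<longlonglongrightarrow> f"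
      proof (intro exI allI impI)
        fix j assume j: "j < m"
        show "(\<lambda>n. eigs_desc (V n * mat_adjoint (V n) * kron A (1\<^sub>m (d n)) * (V n * mat_adjoint (V n))) ! j) \<longlonglongrightarrow> c"
        proof (rule tendsto_eventually, rule eventually_mono[OF ev])
          fix n assume mn: "m \<le> Min ((\<lambda>i. dim1 (M n i)) ` {..<l})"
          interpret C: chan k l "N n" "d n" \<sigma> "M n" "\<Phi> n" "V n" by (rule ch)
          have "Min ((\<lambda>i. dim1 (M n i)) ` {..<l}) \<le> dim1 (M n i0)" using i0 by (intro Min_le[OF fin]) auto
          hence "m \<le> dim1 (M n i0)" using mn by linarith
          also have "\<dots> \<le> count (image_mset Re (proots (char_poly (C.H A)))) c"
            by (rule C.lower[OF A cge i0 ci0])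
          finally have cnt: "m \<le> count (image_mset Re (proots (char_poly (C.H A)))) c" .
          have up: "x \<le> c" if "x \<in># image_mset Re (proots (char_poly (C.H A)))" for x
            using that C.upper[OF A c0 cge] by auto
          have "eigs_desc (C.H A) ! j = c" by (rule eigs_desc_top[OF up cnt j])
          thus "eigs_desc (V n * mat_adjoint (V n) * kron A (1\<^sub>m (d n)) * (V n * mat_adjoint (V n))) ! j = c"
            unfolding C.H_def .
        qed
      qed
    qed
  qed
  show ?thesis using part1 part2 by blast
qed


end
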